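(* Fix an architecture $(\mathbf d,\mathbf k,\mathbf s)$ of depth $N$, training data $X=(x_1,\dots,x_m)\in\mathbb{R}^{d_0\times m}$, $Y=(y_1,\dots,y_m)\in\mathbb{R}^{d_N\times m}$ and a differentiable loss $\ell:\mathbb{R}^{d_N}\times\mathbb{R}^{d_N}\to\mathbb{R}$, and let $\mathcal{L}(\vec w)=\sum_{i=1}^m\ell(\Pi(\vec w)x_i,y_i)$ on $\mathbb{R}^{\bar k}$, $\bar k=\sum_{i=1}^N k_i$. Suppose that $\mathcal{L}$ is twice continuously differentiable and satisfies the Łojasiewicz gradient inequality at every point of $\mathbb{R}^{\bar k}$. For a given $\vec w_0\in\mathbb{R}^{\bar k}$ consider the gradient system \[ \frac{d\vec w(t)}{dt}=-\nabla\mathcal{L}(\vec w(t)),\qquad \vec w(0)=\vec w_0. \] Then: (1) There exists a maximal open interval $I$ with $0\in I$ and a unique integral curve $\vec w:I\to\mathbb{R}^{\bar k}$ solving this system. (2) With $I$ as in (1), suppose there exists a non-decreasing function $g:\mathbb{R}\to\mathbb{R}_{\ge0}$ such that $\|\pi(\vec w)\|_1\le g(\mathcal{L}(\vec w))$ for all $\vec w\in\mathbb{R}^{\bar k}$. Then $\vec w(t)$ is defined and bounded for all $t\ge0$, and $\vec w(t)$ converges to a critical point of $\mathcal{L}$ as $t\to\infty$.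
   Context: An architecture of depth $N$ is a triple $(\mathbf d,\mathbf k,\mathbf s)=((d_0,\dots,d_N),(k_1,\dots,k_N),(s_1,\dots,s_N))$ of positive integers with $d_i=\frac{d_{i-1}-k_i}{s_i}+1$ for $i=1,\dots,N$. For a filter $w\in\mathbb{R}^{k}$ and stride $s$, the convolutional matrix $\Pi_{(d',d''),k,s}(w)\in\mathbb{R}^{d''\times d'}$ (with $d''=\frac{d'-k}{s}+1$) has entries $W_{j,(j-1)s+n}=w_n$ for $j\in\{1,\dots,d''\}$, $n\in\{1,\dots,k\}$, and all other entries $0$. For $\vec w=(w^{(1)},\dots,w^{(N)})$ with $w^{(i)}\in\mathbb{R}^{k_i}$ (identified with a vector in $\mathbb{R}^{\bar k}$), set $\Pi(\vec w):=W_N W_{N-1}\cdots W_1$ with $W_i=\Pi_{(d_{i-1},d_i),k_i,s_i}(w^{(i)})$. The matrix $\Pi(\vec w)$ is again a convolutional matrix with stride $s_v=\prod_{i=1}^N s_i$ and filter width $k_v=k_1+\sum_{i=2}^N(k_i-1)\prod_{m=1}^{i-1}s_m$; its filter $v\in\mathbb{R}^{k_v}$ is denoted $\pi(\vec w)$ (the "final filter"). Equivalently, $\sum_{j=0}^{k_v-1}v_{j+1}x^j=\prod_{i=1}^N\sum_{j=0}^{k_i-1}w^{(i)}_{j+1}x^{j\prod_{n=1}^{i-1}s_n}$. $\|\cdot\|_1$ is the $\ell_1$-norm on $\mathbb{R}^{k_v}$. A differentiable $\phi:\mathbb{R}^n\to\mathbb{R}$ satisfies the Łojasiewicz gradient inequality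 at $x$ if there exist a neighborhood $U$ of $x$ and constants $c>0$, $\mu\in[0,1)$ with $|\phi(x)-\phi(y)|^\mu\le c\|\nabla\phi(y)\|$ for all $y\in U$. *)

theory Defs
  imports "HOL-Analysis.Analysis"
begin

definition architecture :: "nat \<Rightarrow> (nat \<Rightarrow> nat) \<Rightarrow> (nat \<Rightarrow> nat) \<Rightarrow> (nat \<Rightarrow> nat) \<Rightarrow> bool" where
  "architecture N d k s \<longleftrightarrow>
     (\<forall>i\<le>N. 0 < d i) \<and>
     (\<forall>i\<in>{1..N}. 0 < k i \<and> 0 < s i \<and>
        real (d i) = (real (d (i - 1)) - real (k i)) / real (s i) + 1)"

text \<open>Matrices as functions nat => nat => real (0-indexed rows/columns).
  Convolutional matrix with filter w (0-indexed, width k) and stride s: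
  entry (j, j*s + n) is w n for n < k (0-indexed form of W_{j,(j-1)s+n} = w_n).\<close>
definition conv_mat :: "nat \<Rightarrow> nat \<Rightarrow> (nat \<Rightarrow> real) \<Rightarrow> nat \<Rightarrow> nat \<Rightarrow> real" where
  "conv_mat k s w = (\<lambda>j c. if j * s \<le> c \<and> c < j * s + k then w (c - j * s) else 0)"

definition mat_mult :: "nat \<Rightarrow> (nat \<Rightarrow> nat \<Rightarrow> real) \<Rightarrow> (nat \<Rightarrow> nat \<Rightarrow> real) \<Rightarrow> nat \<Rightarrow> nat \<Rightarrow> real" where
  "mat_mult m A B = (\<lambda>r c. \<Sum>t<m. A r t * B t c)"

text \<open>net_mat d k s F i = W_i ... W_1 (identity for i = 0), F i = filter of layer i.\<close>
fun net_mat :: "(nat \<Rightarrow> nat) \<Rightarrow> (nat \<Rightarrow> nat) \<Rightarrow> (nat \<Rightarrow> nat) \<Rightarrow> (nat \<Rightarrow> nat \<Rightarrow> real) \<Rightarrow> nat \<Rightarrow> nat \<Rightarrow> nat \<Rightarrow> real" where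
  "net_mat d k s F 0 = (\<lambda>r c. if r = c then 1 else 0)"
| "net_mat d k s F (Suc i) =
     mat_mult (d i) (conv_mat (k (Suc i)) (s (Suc i)) (F (Suc i))) (net_mat d k s F i)"

definition kbar :: "nat \<Rightarrow> (nat \<Rightarrow> nat) \<Rightarrow> nat" where
  "kbar N k = (\<Sum>i\<in>{1..N}. k i)"

definition kv :: "nat \<Rightarrow> (nat \<Rightarrow> nat) \<Rightarrow> (nat \<Rightarrow> nat) \<Rightarrow> nat" where
  "kv N k s = k 1 + (\<Sum>i\<in>{2..N}. (k i - 1) * (\<Prod>j\<in>{1..<i}. s j))"

text \<open>Splitting a parameter vector in R^kbar (coordinates enumerated by pidx : {0..<kbar} -> 'n)
  into the filters w^(1),...,w^(N): w^(i)_n (0-indexed) is coordinate (k_1+...+k_{i-1}) + n.\<close>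
definition filters_of :: "(nat \<Rightarrow> nat) \<Rightarrow> (nat \<Rightarrow> 'n::finite) \<Rightarrow> real^'n \<Rightarrow> nat \<Rightarrow> nat \<Rightarrow> real" where
  "filters_of k pidx x = (\<lambda>i n. x $ pidx ((\<Sum>j\<in>{1..<i}. k j) + n))"

definition Pi_net :: "nat \<Rightarrow> (nat \<Rightarrow> nat) \<Rightarrow> (nat \<Rightarrow> nat) \<Rightarrow> (nat \<Rightarrow> nat) \<Rightarrow> (nat \<Rightarrow> 'n::finite) \<Rightarrow> real^'n \<Rightarrow> nat \<Rightarrow> nat \<Rightarrow> real" where
  "Pi_net N d k s pidx x = net_mat d k s (filters_of k pidx x) N"

text \<open>The final filter pi(w): the filter of the convolutional matrix Pi(w), i.e. its first row
  (entries 0..kv-1); its l1 norm.\<close>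
definition final_filter :: "nat \<Rightarrow> (nat \<Rightarrow> nat) \<Rightarrow> (nat \<Rightarrow> nat) \<Rightarrow> (nat \<Rightarrow> nat) \<Rightarrow> (nat \<Rightarrow> 'n::finite) \<Rightarrow> real^'n \<Rightarrow> nat \<Rightarrow> real" where
  "final_filter N d k s pidx x = (\<lambda>n. Pi_net N d k s pidx x 0 n)"

definition final_filter_l1 :: "nat \<Rightarrow> (nat \<Rightarrow> nat) \<Rightarrow> (nat \<Rightarrow> nat) \<Rightarrow> (nat \<Rightarrow> nat) \<Rightarrow> (nat \<Rightarrow> 'n::finite) \<Rightarrow> real^'n \<Rightarrow> real" where
  "final_filter_l1 N d k s pidx x = (\<Sum>n<kv N k s. \<bar>final_filter N d k s pidx x n\<bar>)"

text \<open>Network output Pi(w) x for an input x in R^{d_0} (given by its coordinates 0..d_0-1),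
  as a vector in R^{d_N} whose coordinates are enumerated by oidx : {0..<d N} -> 'o.\<close>
definition net_out :: "nat \<Rightarrow> (nat \<Rightarrow> nat) \<Rightarrow> (nat \<Rightarrow> nat) \<Rightarrow> (nat \<Rightarrow> nat) \<Rightarrow> (nat \<Rightarrow> 'n::finite) \<Rightarrow> (nat \<Rightarrow> 'o::finite) \<Rightarrow> real^'n \<Rightarrow> (nat \<Rightarrow> real) \<Rightarrow> real^'o" where
  "net_out N d k s pidx oidx x inp =
     (\<chi> j. \<Sum>c<d 0. Pi_net N d k s pidx x (inv_into {..<d N} oidx j) c * inp c)"

definition train_loss :: "nat \<Rightarrow> (nat \<Rightarrow> nat) \<Rightarrow> (nat \<Rightarrow> nat) \<Rightarrow> (nat \<Rightarrow> nat) \<Rightarrow> (nat \<Rightarrow> 'n::finite) \<Rightarrow> (nat \<Rightarrow> 'o::finite)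
    \<Rightarrow> ((real^'o) \<times> (real^'o) \<Rightarrow> real) \<Rightarrow> nat \<Rightarrow> (nat \<Rightarrow> nat \<Rightarrow> real) \<Rightarrow> (nat \<Rightarrow> real^'o) \<Rightarrow> real^'n \<Rightarrow> real" where
  "train_loss N d k s pidx oidx l m X Y x = (\<Sum>i<m. l (net_out N d k s pidx oidx x (X i), Y i))"

text \<open>Power with the convention a^0 = 1 (also for a = 0), for a >= 0.\<close>
definition loj_pow :: "real \<Rightarrow> real \<Rightarrow> real" where
  "loj_pow a \<mu> = (if \<mu> = 0 then 1 else a powr \<mu>)"

definition lojasiewicz_at :: "('a::real_normed_vector \<Rightarrow> real) \<Rightarrow> ('a \<Rightarrow> 'a) \<Rightarrow> 'a \<Rightarrow> bool" where
  "lojasiewicz_at \<phi> G x \<longleftrightarrow>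
     (\<exists>U c \<mu>. open U \<and> x \<in> U \<and> c > 0 \<and> 0 \<le> \<mu> \<and> \<mu> < 1 \<and>
        (\<forall>y\<in>U. loj_pow \<bar>\<phi> x - \<phi> y\<bar> \<mu> \<le> c * norm (G y)))"

definition grad_flow_sol :: "('a::real_normed_vector \<Rightarrow> 'a) \<Rightarrow> 'a \<Rightarrow> real set \<Rightarrow> (real \<Rightarrow> 'a) \<Rightarrow> bool" where
  "grad_flow_sol G w0 I w \<longleftrightarrow>
     0 \<in> I \<and> w 0 = w0 \<and> (\<forall>t\<in>I. (w has_vector_derivative - G (w t)) (at t))"

end

theory Submission
  imports Defs
begin

lemma inner_self_deriv:
  fixes u :: "real \<Rightarrow> 'a::real_inner"
  assumes "(u has_vector_derivative u') (at t)"
  shows "((\<lambda>\<tau>. u \<tau> \<bullet> u \<tau>) has_real_derivative 2 * (u t \<bullet> u')) (at t)"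
proof -
  have d: "(u has_derivative (\<lambda>h. h *\<^sub>R u')) (at t)"
    using assms by (simp add: has_vector_derivative_def)
  have "((\<lambda>\<tau>. u \<tau> \<bullet> u \<tau>) has_derivative (\<lambda>h. u t \<bullet> (h *\<^sub>R u') + (h *\<^sub>R u') \<bullet> u t)) (at t)"
    by (rule has_derivative_inner[OF d d])
  moreover have "(\<lambda>h. u t \<bullet> (h *\<^sub>R u') + (h *\<^sub>R u') \<bullet> u t) = (*) (2 * (u t \<bullet> u'))"
    by (auto simp: inner_commute algebra_simps)
  ultimately show ?thesis
    unfolding has_field_derivative_def by simp
qed

lemma gronwall_zero:
  fixes e e' :: "real \<Rightarrow> real"
  assumes ab: "a \<le> b"
    and de: "\<And>\<tau>. \<tau> \<in> {a..b} \<Longrightarrow> (e has_real_derivative e' \<tau>) (at \<tau>)"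
    and bd: "\<And>\<tau>. \<tau> \<in> {a..b} \<Longrightarrow> \<bar>e' \<tau>\<bar> \<le> C * e \<tau>"
    and nn: "\<And>\<tau>. \<tau> \<in> {a..b} \<Longrightarrow> 0 \<le> e \<tau>"
  shows "e a = 0 \<Longrightarrow> e b = 0" and "e b = 0 \<Longrightarrow> e a = 0"
proof -
  have conte: "continuous_on {a..b} e"
    using de by (meson DERIV_isCont continuous_at_imp_continuous_on)
  {
    assume ea: "e a = 0"
    let ?f = "\<lambda>\<tau>. e \<tau> * exp (- C * \<tau>)"
    have "?f b \<le> ?f a"
    proof (rule DERIV_nonpos_imp_decreasing_open[OF ab])
      fix x assume x: "a < x" "x < b"
      have "(?f has_real_derivative (e' x * exp (- C * x) + e x * (exp (- C * x) * (- C)))) (at x)"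
        by (rule derivative_eq_intros de | use x in auto)+
      moreover have "e' x * exp (- C * x) + e x * (exp (- C * x) * (- C)) \<le> 0"
      proof -
        have "e' x \<le> C * e x" using bd[of x] x by auto
        then have "(e' x - C * e x) * exp (- C * x) \<le> 0"
          by (simp add: mult_nonpos_nonneg)
        then show ?thesis by (simp add: algebra_simps)
      qed
      ultimately show "\<exists>y. (?f has_real_derivative y) (at x) \<and> y \<le> 0" by blast
    next
      show "continuous_on {a..b} ?f"
        by (intro continuous_intros conte)
    qed
    then have "e b * exp (- C * b) \<le> 0" using ea by simp
    then have "e b \<le> 0" by (simp add: mult_le_0_iff)
    then show "e b = 0" using nn[of b] ab by auto
  }
  {
    assume eb: "e b = 0"
    let ?f = "\<lambda>\<tau>. e \<tau> * exp (C * \<tau>)"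
    have "?f a \<le> ?f b"
    proof (rule DERIV_nonneg_imp_increasing_open[OF ab])
      fix x assume x: "a < x" "x < b"
      have "(?f has_real_derivative (e' x * exp (C * x) + e x * (exp (C * x) * C))) (at x)"
        by (rule derivative_eq_intros de | use x in auto)+
      moreover have "0 \<le> e' x * exp (C * x) + e x * (exp (C * x) * C)"
      proof -
        have "- C * e x \<le> e' x" using bd[of x] x by auto
        then have "0 \<le> (e' x + C * e x) * exp (C * x)"
          by simp
        then show ?thesis by (simp add: algebra_simps)
      qed
      ultimately show "\<exists>y. (?f has_real_derivative y) (at x) \<and> 0 \<le> y" by blast
    next
      show "continuous_on {a..b} ?f"
        by (intro continuous_intros conte)
    qed
    then have "e a * exp (C * a) \<le> 0" using eb by simp
    then have "e a \<le> 0" by (simp add: mult_le_0_iff)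
    then show "e a = 0" using nn[of a] ab by auto
  }
qed

definition loc_lip :: "('a::real_normed_vector \<Rightarrow> 'a) \<Rightarrow> bool" where
  "loc_lip F \<longleftrightarrow> (\<forall>R. \<exists>L. \<forall>x y. norm x \<le> R \<longrightarrow> norm y \<le> R \<longrightarrow> norm (F x - F y) \<le> L * norm (x - y))"

lemma ode_unique:
  fixes F :: "'a::euclidean_space \<Rightarrow> 'a"
  assumes lip: "loc_lip F"
    and J: "is_interval J" "t0 \<in> J" "t \<in> J"
    and y: "\<And>\<tau>. \<tau> \<in> J \<Longrightarrow> (y has_vector_derivative F (y \<tau>)) (at \<tau>)"
    and z: "\<And>\<tau>. \<tau> \<in> J \<Longrightarrow> (z has_vector_derivative F (z \<tau>)) (at \<tau>)"
    and eq: "y t0 = z t0"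
  shows "y t = z t"
proof -
  define a where "a = min t0 t"
  define b where "b = max t0 t"
  have ab: "a \<le> b" by (simp add: a_def b_def)
  have K: "{a..b} \<subseteq> J"
  proof
    fix x assume x: "x \<in> {a..b}"
    have "a \<in> J" "b \<in> J" using J by (auto simp: a_def b_def min_def max_def)
    with x show "x \<in> J" using J(1) unfolding is_interval_1 by (meson atLeastAtMost_iff)
  qed
  have cy: "continuous_on {a..b} y"
    using K y by (meson continuous_at_imp_continuous_on has_vector_derivative_continuous subsetD)
  have cz: "continuous_on {a..b} z"
    using K z by (meson continuous_at_imp_continuous_on has_vector_derivative_continuous subsetD)
  obtain R1 where R1: "\<And>\<tau>. \<tau> \<in> {a..b} \<Longrightarrow> norm (y \<tau>) \<le> R1"
    using compact_imp_bounded[OF compact_continuous_image[OF cy compact_Icc]]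
    unfolding bounded_iff by (meson image_eqI)
  obtain R2 where R2: "\<And>\<tau>. \<tau> \<in> {a..b} \<Longrightarrow> norm (z \<tau>) \<le> R2"
    using compact_imp_bounded[OF compact_continuous_image[OF cz compact_Icc]]
    unfolding bounded_iff by (metis image_eqI)
  obtain L where L: "\<And>x y. norm x \<le> max R1 R2 \<Longrightarrow> norm y \<le> max R1 R2 \<Longrightarrow> norm (F x - F y) \<le> L * norm (x - y)"
    using lip unfolding loc_lip_def by blast
  define e where "e \<tau> = (y \<tau> - z \<tau>) \<bullet> (y \<tau> - z \<tau>)" for \<tau>
  define e' where "e' \<tau> = 2 * ((y \<tau> - z \<tau>) \<bullet> (F (y \<tau>) - F (z \<tau>)))" for \<tau>
  have de: "(e has_real_derivative e' \<tau>) (at \<tau>)" if "\<tau> \<in> {a..b}" for \<tau>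
  proof -
    have "((\<lambda>\<tau>. y \<tau> - z \<tau>) has_vector_derivative (F (y \<tau>) - F (z \<tau>))) (at \<tau>)"
      using y z K that by (intro has_vector_derivative_diff) auto
    from inner_self_deriv[OF this] show ?thesis unfolding e_def e'_def .
  qed
  have bd: "\<bar>e' \<tau>\<bar> \<le> (2 * \<bar>L\<bar>) * e \<tau>" if "\<tau> \<in> {a..b}" for \<tau>
  proof -
    have "\<bar>e' \<tau>\<bar> \<le> 2 * (norm (y \<tau> - z \<tau>) * norm (F (y \<tau>) - F (z \<tau>)))"
      unfolding e'_def using Cauchy_Schwarz_ineq2 by (simp add: abs_mult)
    also have "\<dots> \<le> 2 * (norm (y \<tau> - z \<tau>) * (\<bar>L\<bar> * norm (y \<tau> - z \<tau>)))"
    proof -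
      have "norm (F (y \<tau>) - F (z \<tau>)) \<le> L * norm (y \<tau> - z \<tau>)"
        using L[OF _ _] R1[OF that] R2[OF that] by (meson max.cobounded1 max.cobounded2 order_trans)
      also have "\<dots> \<le> \<bar>L\<bar> * norm (y \<tau> - z \<tau>)" by (simp add: mult_right_mono)
      finally show ?thesis by (simp add: mult_left_mono)
    qed
    also have "\<dots> = (2 * \<bar>L\<bar>) * e \<tau>"
      unfolding e_def by (simp add: power2_norm_eq_inner[symmetric] power2_eq_square)
    finally show ?thesis .
  qed
  have nn: "0 \<le> e \<tau>" for \<tau> unfolding e_def by simp
  have "e t = 0"
  proof (cases "t0 \<le> t")
    case True
    then have "a = t0" "b = t" by (auto simp: a_def b_def)
    then show ?thesis using gronwall_zero(1)[OF ab de bd nn] eq by (simp add: e_def)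
  next
    case False
    then have "a = t" "b = t0" by (auto simp: a_def b_def)
    then show ?thesis using gronwall_zero(2)[OF ab de bd nn] eq by (simp add: e_def)
  qed
  then show ?thesis by (simp add: e_def)
qed

lemma int_diff_bound:
  fixes f :: "real \<Rightarrow> 'a::banach"
  assumes cf: "continuous_on {a..b} f" and t0: "t0 \<in> {a..b}" and u: "u \<in> {a..b}"
    and B: "\<And>s. s \<in> {a..b} \<Longrightarrow> norm (f s) \<le> B"
  shows "norm (integral {a..u} f - integral {a..t0} f) \<le> B * \<bar>u - t0\<bar>"
proof (cases "u \<le> t0")
  case True
  have "integral {a..u} f + integral {u..t0} f = integral {a..t0} f"
    by (rule Henstock_Kurzweil_Integration.integral_combine) (use True u t0 in \<open>auto intro!: integrable_continuous_interval continuous_on_subset[OF cf]\<close>)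
  then have "integral {a..u} f - integral {a..t0} f = - integral {u..t0} f"
    by (simp add: algebra_simps)
  moreover have "norm (integral {u..t0} f) \<le> B * (t0 - u)"
    by (rule integral_bound) (use True u t0 in \<open>auto intro: B continuous_on_subset[OF cf]\<close>)
  ultimately show ?thesis using True by simp
next
  case False
  have "integral {a..t0} f + integral {t0..u} f = integral {a..u} f"
    by (rule Henstock_Kurzweil_Integration.integral_combine) (use False u t0 in \<open>auto intro!: integrable_continuous_interval continuous_on_subset[OF cf]\<close>)
  then have "integral {a..u} f - integral {a..t0} f = integral {t0..u} f"
    by (simp add: algebra_simps)
  moreover have "norm (integral {t0..u} f) \<le> B * (u - t0)"
    by (rule integral_bound) (use False u t0 in \<open>auto intro: B continuous_on_subset[OF cf]\<close>)
  ultimately show ?thesis using False by simp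
qed

lemma ode_local_exist:
  fixes F :: "'a::euclidean_space \<Rightarrow> 'a"
  assumes lip: "loc_lip F" and cont: "continuous_on UNIV F"
  shows "\<exists>h>0. \<forall>t0 x0. norm x0 \<le> R \<longrightarrow>
           (\<exists>y. y t0 = x0 \<and> (\<forall>t\<in>{t0-h<..<t0+h}. (y has_vector_derivative F (y t)) (at t)))"
proof -
  obtain L where L: "\<And>x y. norm x \<le> R + 1 \<Longrightarrow> norm y \<le> R + 1 \<Longrightarrow> norm (F x - F y) \<le> L * norm (x - y)"
    using lip unfolding loc_lip_def by blast
  obtain M where M: "\<And>x. norm x \<le> R + 1 \<Longrightarrow> norm (F x) \<le> M"
  proof -
    have "compact (F ` cball 0 (R + 1))"
      by (rule compact_continuous_image[OF continuous_on_subset[OF cont] compact_cball]) auto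
    then obtain M where "\<forall>x\<in>F ` cball 0 (R+1). norm x \<le> M"
      using compact_imp_bounded bounded_iff by metis
    then show ?thesis using that by (metis image_eqI mem_cball_0)
  qed
  define h where "h = 1 / (4 * (\<bar>M\<bar> + \<bar>L\<bar> + 1))"
  have hpos: "h > 0" unfolding h_def by (simp add: add_pos_nonneg)
  have hM: "\<bar>M\<bar> * h \<le> 1/4" and hL: "\<bar>L\<bar> * h \<le> 1/4"
    unfolding h_def by (simp_all add: field_simps)
  show ?thesis
  proof (intro exI[of _ h] conjI allI impI hpos)
    fix t0 :: real and x0 :: 'a
    assume x0: "norm x0 \<le> R"
    define a where "a = t0 - h"
    define b where "b = t0 + h"
    define cl where "cl t = max a (min b t)" for t
    have ab: "a \<le> b" and t0ab: "t0 \<in> {a..b}" using hpos by (auto simp: a_def b_def)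
    have cl_in: "cl t \<in> {a..b}" for t using ab by (auto simp: cl_def)
    have cl_dist: "\<bar>cl t - t0\<bar> \<le> h" for t using hpos by (auto simp: cl_def a_def b_def)
    have cl_cont: "continuous_on UNIV cl" unfolding cl_def by (intro continuous_intros)
    define S :: "(real \<Rightarrow>\<^sub>C 'a) set" where "S = PiC UNIV (\<lambda>_. cball x0 1)"
    have S_iff: "y \<in> S \<longleftrightarrow> (\<forall>t. dist x0 (apply_bcontfun y t) \<le> 1)" for y
      unfolding S_def mem_PiC_iff by auto
    have S_norm: "norm (apply_bcontfun y t) \<le> R + 1" if "y \<in> S" for y t
    proof -
      have "norm (apply_bcontfun y t - x0) \<le> 1" using that S_iff by (simp add: dist_norm norm_minus_commute)
      then show ?thesis using x0 norm_triangle_ineq2[of "apply_bcontfun y t" x0] by linarith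
    qed
    have contFy: "continuous_on A (\<lambda>s. F (apply_bcontfun y s))" for y A
      by (rule continuous_on_compose2[OF cont continuous_on_apply_bcontfun]) auto
    define Tf where "Tf y = (\<lambda>t. x0 + (integral {a..cl t} (\<lambda>s. F (apply_bcontfun y s)) - integral {a..t0} (\<lambda>s. F (apply_bcontfun y s))))"
      for y :: "real \<Rightarrow>\<^sub>C 'a"
    have Tf_near: "norm (Tf y t - x0) \<le> 1/4" if "y \<in> S" for y t
    proof -
      have "norm (Tf y t - x0) = norm (integral {a..cl t} (\<lambda>s. F (apply_bcontfun y s)) - integral {a..t0} (\<lambda>s. F (apply_bcontfun y s)))"
        by (simp add: Tf_def)
      also have "\<dots> \<le> \<bar>M\<bar> * \<bar>cl t - t0\<bar>"
        by (rule int_diff_bound[OF contFy t0ab cl_in]) (meson M S_norm[OF that] abs_ge_self order_trans)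
      also have "\<dots> \<le> \<bar>M\<bar> * h" by (rule mult_left_mono[OF cl_dist]) simp
      finally show ?thesis using hM by simp
    qed
    have Tf_bc: "Tf y \<in> bcontfun" if "y \<in> S" for y
    proof (rule bcontfun_normI)
      have "continuous_on {a..b} (\<lambda>u. integral {a..u} (\<lambda>s. F (apply_bcontfun y s)))"
        by (intro indefinite_integral_continuous_1 integrable_continuous_interval contFy)
      then have "continuous_on UNIV (\<lambda>t. integral {a..cl t} (\<lambda>s. F (apply_bcontfun y s)))"
        by (rule continuous_on_compose2[OF _ cl_cont]) (use cl_in in auto)
      then show "continuous_on UNIV (Tf y)" unfolding Tf_def by (intro continuous_intros)
    next
      fix t
      show "norm (Tf y t) \<le> norm x0 + 1/4"
        using Tf_near[OF that, of t] norm_triangle_ineq2[of "Tf y t" x0] by linarith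
    qed
    define T where "T y = Bcontfun (Tf y)" for y
    have T_app: "apply_bcontfun (T y) = Tf y" if "y \<in> S" for y
      unfolding T_def using Tf_bc[OF that] by (simp add: Bcontfun_inverse)
    have TS: "T ` S \<subseteq> S"
    proof
      fix z assume "z \<in> T ` S"
      then obtain y where y: "y \<in> S" "z = T y" by auto
      show "z \<in> S" unfolding S_iff y(2) T_app[OF y(1)]
      proof
        fix t
        have "norm (Tf y t - x0) \<le> 1/4" by (rule Tf_near[OF y(1)])
        then show "dist x0 (Tf y t) \<le> 1" by (simp add: dist_norm norm_minus_commute)
      qed
    qed
    have Tlip: "dist (T y) (T z) \<le> (1/2) * dist y z" if y: "y \<in> S" and z: "z \<in> S" for y z
    proof (rule dist_bound)
      fix t
      let ?g = "\<lambda>s. F (apply_bcontfun y s) - F (apply_bcontfun z s)"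
      have "Tf y t - Tf z t = integral {a..cl t} ?g - integral {a..t0} ?g"
      proof -
        have i1: "(\<lambda>s. F (apply_bcontfun y s)) integrable_on {a..u}" 
          and i2: "(\<lambda>s. F (apply_bcontfun z s)) integrable_on {a..u}" for u
          by (intro integrable_continuous_interval contFy)+
        show ?thesis unfolding Tf_def integral_diff[OF i1 i2] by (simp add: algebra_simps)
      qed
      then have "dist (apply_bcontfun (T y) t) (apply_bcontfun (T z) t) = norm (integral {a..cl t} ?g - integral {a..t0} ?g)"
        by (simp add: T_app y z dist_norm)
      also have "\<dots> \<le> (\<bar>L\<bar> * dist y z) * \<bar>cl t - t0\<bar>"
      proof (rule int_diff_bound[OF _ t0ab cl_in])
        show "continuous_on {a..b} ?g" by (intro continuous_intros contFy)
        fix s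
        have "norm (?g s) \<le> L * norm (apply_bcontfun y s - apply_bcontfun z s)"
          by (rule L) (use S_norm y z in auto)
        also have "\<dots> \<le> \<bar>L\<bar> * dist (apply_bcontfun y s) (apply_bcontfun z s)"
          by (simp add: dist_norm mult_right_mono)
        also have "\<dots> \<le> \<bar>L\<bar> * dist y z"
          by (rule mult_left_mono[OF dist_bounded]) simp
        finally show "norm (?g s) \<le> \<bar>L\<bar> * dist y z" .
      qed
      also have "\<dots> \<le> (\<bar>L\<bar> * dist y z) * h"
        by (rule mult_left_mono[OF cl_dist]) simp
      also have "\<dots> = (\<bar>L\<bar> * h) * dist y z" by simp
      also have "\<dots> \<le> (1/2) * dist y z"
        by (rule mult_right_mono) (use hL in auto)
      finally show "dist (apply_bcontfun (T y) t) (apply_bcontfun (T z) t) \<le> (1/2) * dist y z" .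
    qed
    have Scomplete: "complete S"
      unfolding S_def complete_eq_closed by (rule closed_PiC) simp
    have Sne: "S \<noteq> {}"
    proof -
      have "const_bcontfun x0 \<in> S" unfolding S_iff by (simp add: const_bcontfun.rep_eq)
      then show ?thesis by blast
    qed
    have "\<exists>!x\<in>S. T x = x"
      by (rule Banach_fix[OF Scomplete Sne _ _ TS Tlip]) simp_all
    then obtain y where yS: "y \<in> S" and yfix: "T y = y"
      by blast
    have yeq: "apply_bcontfun y t = Tf y t" for t
      using T_app[OF yS] yfix by metis
    show "\<exists>y. y t0 = x0 \<and> (\<forall>t\<in>{t0-h<..<t0+h}. (y has_vector_derivative F (y t)) (at t))"
    proof (intro exI[of _ "apply_bcontfun y"] conjI ballI)
      have "cl t0 = t0" using hpos by (auto simp: cl_def a_def b_def)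
      then have "Tf y t0 = x0" by (simp add: Tf_def)
      then show "apply_bcontfun y t0 = x0" using yeq[of t0] by metis
    next
      fix t assume t: "t \<in> {t0-h<..<t0+h}"
      then have tab: "t \<in> {a<..<b}" by (simp add: a_def b_def)
      let ?I = "\<lambda>u. x0 + (integral {a..u} (\<lambda>s. F (apply_bcontfun y s)) - integral {a..t0} (\<lambda>s. F (apply_bcontfun y s)))"
      have "((\<lambda>u. integral {a..u} (\<lambda>s. F (apply_bcontfun y s))) has_vector_derivative F (apply_bcontfun y t)) (at t within {a..b})"
        by (rule integral_has_vector_derivative[OF contFy]) (use tab in auto)
      then have "((\<lambda>u. integral {a..u} (\<lambda>s. F (apply_bcontfun y s))) has_vector_derivative F (apply_bcontfun y t)) (at t within {a<..<b})"
        by (rule has_vector_derivative_within_subset) auto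
      then have "((\<lambda>u. integral {a..u} (\<lambda>s. F (apply_bcontfun y s))) has_vector_derivative F (apply_bcontfun y t)) (at t)"
        using at_within_open[OF tab open_greaterThanLessThan] by metis
      then have "(?I has_vector_derivative (0 + (F (apply_bcontfun y t) - 0))) (at t)"
        by (intro has_vector_derivative_add has_vector_derivative_const has_vector_derivative_diff)
      then have "(?I has_vector_derivative F (apply_bcontfun y t)) (at t)"
        by simp
      moreover have "?I u = apply_bcontfun y u" if "u \<in> {a<..<b}" for u
      proof -
        have "cl u = u" using that by (auto simp: cl_def)
        then have "?I u = Tf y u" by (simp add: Tf_def)
        then show ?thesis using yeq[of u] by metis
      qed
      ultimately show "(apply_bcontfun y has_vector_derivative F (apply_bcontfun y t)) (at t)"
        by (rule has_vector_derivative_transform_within_open[OF _ open_greaterThanLessThan tab])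
    qed
  qed
qed

definition gsol :: "('a::real_normed_vector \<Rightarrow> 'a) \<Rightarrow> 'a \<Rightarrow> real set \<Rightarrow> (real \<Rightarrow> 'a) \<Rightarrow> bool" where
  "gsol F x0 I w \<longleftrightarrow> 0 \<in> I \<and> w 0 = x0 \<and> (\<forall>t\<in>I. (w has_vector_derivative F (w t)) (at t))"

lemma is_interval_ioo: "is_interval {a<..<b::real}"
  by (auto simp: is_interval_1)

lemma is_interval_Un_real:
  fixes A B :: "real set"
  assumes "is_interval A" "is_interval B" "c \<in> A" "c \<in> B"
  shows "is_interval (A \<union> B)"
  unfolding is_interval_1
proof (intro ballI allI impI)
  fix a b x assume ab: "a \<in> A \<union> B" "b \<in> A \<union> B" and x: "a \<le> x \<and> x \<le> b"
  have iA: "\<And>a b x. a \<in> A \<Longrightarrow> b \<in> A \<Longrightarrow> a \<le> x \<Longrightarrow> x \<le> b \<Longrightarrow> x \<in> A"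
    using assms(1) unfolding is_interval_1 by blast
  have iB: "\<And>a b x. a \<in> B \<Longrightarrow> b \<in> B \<Longrightarrow> a \<le> x \<Longrightarrow> x \<le> b \<Longrightarrow> x \<in> B"
    using assms(2) unfolding is_interval_1 by blast
  show "x \<in> A \<union> B"
  proof (cases "x \<le> c")
    case True
    then show ?thesis using ab x iA[of a c x] iB[of a c x] assms(3,4) by auto
  next
    case False
    then show ?thesis using ab x iA[of c b x] iB[of c b x] assms(3,4) by auto
  qed
qed

lemma ode_maximal:
  fixes F :: "'a::euclidean_space \<Rightarrow> 'a"
  assumes lip: "loc_lip F" and cont: "continuous_on UNIV F"
  shows "\<exists>I w. open I \<and> is_interval I \<and> gsol F x0 I w \<and>
     (\<forall>J v. open J \<and> is_interval J \<and> gsol F x0 J v \<longrightarrow> J \<subseteq> I \<and> (\<forall>t\<in>J. v t = w t))"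
proof -
  define P where "P J v \<longleftrightarrow> open J \<and> is_interval J \<and> gsol F x0 J v" for J v
  define I where "I = \<Union>{J. \<exists>v. P J v}"
  define w where "w t = (SOME v. \<exists>J. t \<in> J \<and> P J v) t" for t
  have agree: "v t = v' t" if "P J v" "P J' v'" "t \<in> J" "t \<in> J'" for J v J' v' t
  proof (rule ode_unique[OF lip, of "J \<inter> J'" 0])
    show "is_interval (J \<inter> J')" using that by (auto simp: P_def intro: is_interval_Int)
    show "0 \<in> J \<inter> J'" "t \<in> J \<inter> J'" using that by (auto simp: P_def gsol_def)
    show "(v has_vector_derivative F (v \<tau>)) (at \<tau>)" if "\<tau> \<in> J \<inter> J'" for \<tau>
      using that \<open>P J v\<close> by (auto simp: P_def gsol_def)
    show "(v' has_vector_derivative F (v' \<tau>)) (at \<tau>)" if "\<tau> \<in> J \<inter> J'" for \<tau>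
      using that \<open>P J' v'\<close> by (auto simp: P_def gsol_def)
    show "v 0 = v' 0" using that by (auto simp: P_def gsol_def)
  qed
  have wv: "w t = v t" if "P J v" "t \<in> J" for J v t
  proof -
    have "\<exists>v J. t \<in> J \<and> P J v" using that by blast
    then have "\<exists>J. t \<in> J \<and> P J (SOME v. \<exists>J. t \<in> J \<and> P J v)" by (rule someI_ex[where P="\<lambda>v. \<exists>J. t \<in> J \<and> P J v", OF exE]) blast
    then obtain J' where "t \<in> J'" "P J' (SOME v. \<exists>J. t \<in> J \<and> P J v)" by blast
    then show ?thesis unfolding w_def using agree[OF that(1) _ that(2)] by metis
  qed
  obtain h where h: "h > 0" and hex: "\<And>t0 x. norm x \<le> norm x0 \<Longrightarrow>
      \<exists>y. y t0 = x \<and> (\<forall>t\<in>{t0-h<..<t0+h}. (y has_vector_derivative F (y t)) (at t))"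
    using ode_local_exist[OF lip cont, of "norm x0"] by blast
  obtain y0 where y0: "y0 0 = x0" "\<And>t. t \<in> {0-h<..<0+h} \<Longrightarrow> (y0 has_vector_derivative F (y0 t)) (at t)"
    using hex[of x0 0] by auto
  have P0: "P {0-h<..<0+h} y0"
    unfolding P_def gsol_def using y0 h by (auto simp: is_interval_ioo)
  show ?thesis
  proof (intro exI[of _ I] exI[of _ w] conjI allI impI)
    show "open I" unfolding I_def P_def by auto
    show "is_interval I"
      unfolding is_interval_1
    proof (intro ballI allI impI)
      fix a b x assume a: "a \<in> I" and b: "b \<in> I" and x: "a \<le> x \<and> x \<le> b"
      obtain J1 v1 where J1: "P J1 v1" "a \<in> J1" using a unfolding I_def by auto
      obtain J2 v2 where J2: "P J2 v2" "b \<in> J2" using b unfolding I_def by auto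
      have "0 \<in> J1" "0 \<in> J2" using J1 J2 by (auto simp: P_def gsol_def)
      show "x \<in> I"
      proof (cases "x \<le> 0")
        case True
        then have "x \<in> J1" using J1 \<open>0 \<in> J1\<close> x unfolding P_def is_interval_1 by blast
        then show ?thesis using J1 unfolding I_def by auto
      next
        case False
        then have "x \<in> J2" using J2 \<open>0 \<in> J2\<close> x unfolding P_def is_interval_1 by (meson less_eq_real_def not_le)
        then show ?thesis using J2 unfolding I_def by auto
      qed
    qed
    show "gsol F x0 I w"
      unfolding gsol_def
    proof (intro conjI ballI)
      show "0 \<in> I" using P0 h unfolding I_def by auto
      show "w 0 = x0" using wv[OF P0, of 0] y0 h by simp
    next
      fix t assume "t \<in> I"
      then obtain J v where Jv: "P J v" "t \<in> J" unfolding I_def by auto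
      have "(v has_vector_derivative F (v t)) (at t)" using Jv by (auto simp: P_def gsol_def)
      then have "(w has_vector_derivative F (v t)) (at t)"
        by (rule has_vector_derivative_transform_within_open[of _ _ _ J]) (use Jv wv in \<open>auto simp: P_def\<close>)
      then show "(w has_vector_derivative F (w t)) (at t)" using wv[OF Jv] by simp
    qed
  next
    fix J v assume "open J \<and> is_interval J \<and> gsol F x0 J v"
    then have Jv: "P J v" by (simp add: P_def)
    show "J \<subseteq> I" using Jv unfolding I_def by auto
    show "\<forall>t\<in>J. v t = w t" using wv[OF Jv] by simp
  qed
qed

lemma ode_global:
  fixes F :: "'a::euclidean_space \<Rightarrow> 'a"
  assumes lip: "loc_lip F" and cont: "continuous_on UNIV F"
    and I: "open I" "is_interval I" and sol: "gsol F x0 I w"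
    and max: "\<forall>J v. open J \<and> is_interval J \<and> gsol F x0 J v \<longrightarrow> J \<subseteq> I \<and> (\<forall>t\<in>J. v t = w t)"
    and bnd: "\<And>t. t \<in> I \<Longrightarrow> 0 \<le> t \<Longrightarrow> norm (w t) \<le> R"
  shows "{0..} \<subseteq> I"
proof (rule ccontr)
  assume "\<not> {0..} \<subseteq> I"
  define A where "A = {0..} \<inter> - I"
  have Ane: "A \<noteq> {}" using \<open>\<not> {0..} \<subseteq> I\<close> unfolding A_def by auto
  have Abdd: "bdd_below A" unfolding A_def by (rule bdd_belowI[of _ 0]) auto
  have Acl: "closed A" unfolding A_def using I(1) by (intro closed_Int) auto
  define b where "b = Inf A"
  have bA: "b \<in> A" unfolding b_def by (rule closed_contains_Inf[OF Ane Abdd Acl])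
  have below: "t \<in> I" if "0 \<le> t" "t < b" for t
  proof (rule ccontr)
    assume "t \<notin> I"
    then have "t \<in> A" using that unfolding A_def by auto
    then have "b \<le> t" unfolding b_def by (rule cInf_lower[OF _ Abdd])
    then show False using that by simp
  qed
  have I0: "0 \<in> I" "w 0 = x0" using sol by (auto simp: gsol_def)
  have bpos: "0 < b" using bA I0 unfolding A_def by (cases "b = 0") auto
  obtain h where h: "h > 0" and hex: "\<And>t0 x. norm x \<le> R \<Longrightarrow>
      \<exists>y. y t0 = x \<and> (\<forall>t\<in>{t0-h<..<t0+h}. (y has_vector_derivative F (y t)) (at t))"
    using ode_local_exist[OF lip cont, of R] by blast
  define t1 where "t1 = max 0 (b - h/2)"
  have t1: "0 \<le> t1" "t1 < b" "b < t1 + h" using bpos h by (auto simp: t1_def)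
  have t1I: "t1 \<in> I" using below t1 by auto
  obtain y where y: "y t1 = w t1" "\<And>t. t \<in> {t1-h<..<t1+h} \<Longrightarrow> (y has_vector_derivative F (y t)) (at t)"
    using hex[OF bnd[OF t1I t1(1)], of t1] by auto
  define K where "K = {t1-h<..<t1+h}"
  have t1K: "t1 \<in> K" using h by (auto simp: K_def)
  have wder: "\<And>t. t \<in> I \<Longrightarrow> (w has_vector_derivative F (w t)) (at t)"
    using sol by (auto simp: gsol_def)
  have yw: "y t = w t" if "t \<in> I \<inter> K" for t
  proof (rule ode_unique[OF lip, of "I \<inter> K" t1])
    show "is_interval (I \<inter> K)" using I(2) by (intro is_interval_Int) (auto simp: K_def is_interval_ioo)
  qed (use that t1I t1K y wder in \<open>auto simp: K_def\<close>)
  define u where "u t = (if t \<in> I then w t else y t)" for t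
  have "open (I \<union> K) \<and> is_interval (I \<union> K) \<and> gsol F x0 (I \<union> K) u"
  proof (intro conjI)
    show "open (I \<union> K)" using I(1) by (auto simp: K_def)
    show "is_interval (I \<union> K)"
      by (rule is_interval_Un_real[OF I(2) _ t1I t1K]) (simp add: K_def is_interval_ioo)
    show "gsol F x0 (I \<union> K) u"
      unfolding gsol_def
    proof (intro conjI ballI)
      show "0 \<in> I \<union> K" using I0 by auto
      show "u 0 = x0" using I0 by (simp add: u_def)
    next
      fix t assume t: "t \<in> I \<union> K"
      show "(u has_vector_derivative F (u t)) (at t)"
      proof (cases "t \<in> I")
        case True
        have "(u has_vector_derivative F (w t)) (at t)"
          by (rule has_vector_derivative_transform_within_open[OF wder[OF True] I(1) True]) (simp add: u_def)
        then show ?thesis using True by (simp add: u_def)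
      next
        case False
        then have tK: "t \<in> K" using t by auto
        have "(u has_vector_derivative F (y t)) (at t)"
          by (rule has_vector_derivative_transform_within_open[OF y(2) _ tK])
             (use tK yw in \<open>auto simp: K_def u_def\<close>)
        then show ?thesis using False by (simp add: u_def)
      qed
    qed
  qed
  then have "I \<union> K \<subseteq> I" using max by blast
  moreover have "b \<in> K" using t1 h by (auto simp: K_def)
  ultimately show False using bA unfolding A_def by auto
qed

lemma inner_const_deriv:
  fixes u :: "real \<Rightarrow> 'a::real_inner"
  assumes "(u has_vector_derivative u') (at t)"
  shows "((\<lambda>\<tau>. e \<bullet> u \<tau>) has_real_derivative (e \<bullet> u')) (at t)"
proof -
  have d: "(u has_derivative (\<lambda>h. h *\<^sub>R u')) (at t)"
    using assms by (simp add: has_vector_derivative_def)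
  have "((\<lambda>\<tau>. e \<bullet> u \<tau>) has_derivative (\<lambda>h. e \<bullet> (h *\<^sub>R u'))) (at t)"
    by (rule has_derivative_inner_right[OF d])
  moreover have "(\<lambda>h. e \<bullet> (h *\<^sub>R u')) = (*) (e \<bullet> u')"
    by (auto simp: algebra_simps)
  ultimately show ?thesis
    unfolding has_field_derivative_def by simp
qed

lemma comp_grad_deriv:
  fixes Lf :: "'a::real_inner \<Rightarrow> real"
  assumes grad: "(Lf has_derivative (\<lambda>h. G x \<bullet> h)) (at x)"
    and wd: "(w has_vector_derivative v) (at t)" and wx: "w t = x"
  shows "((\<lambda>\<tau>. Lf (w \<tau>)) has_real_derivative (G x \<bullet> v)) (at t)"
proof -
  have d: "(w has_derivative (\<lambda>h. h *\<^sub>R v)) (at t)"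
    using wd by (simp add: has_vector_derivative_def)
  have "((\<lambda>\<tau>. Lf (w \<tau>)) has_derivative (\<lambda>h. G x \<bullet> (h *\<^sub>R v))) (at t)"
    by (rule has_derivative_compose[OF d]) (use grad wx in simp)
  moreover have "(\<lambda>h. G x \<bullet> (h *\<^sub>R v)) = (*) (G x \<bullet> v)"
    by (auto simp: algebra_simps)
  ultimately show ?thesis
    unfolding has_field_derivative_def by simp
qed

locale gflow =
  fixes Lf :: "'a::euclidean_space \<Rightarrow> real" and G :: "'a \<Rightarrow> 'a" and w :: "real \<Rightarrow> 'a"
  assumes grad: "\<And>x. (Lf has_derivative (\<lambda>h. G x \<bullet> h)) (at x)"
    and Gc: "continuous_on UNIV G"
    and wd: "\<And>t. 0 \<le> t \<Longrightarrow> (w has_vector_derivative - G (w t)) (at t)"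
begin

lemma Lw_deriv: "0 \<le> t \<Longrightarrow> ((\<lambda>\<tau>. Lf (w \<tau>)) has_real_derivative - (G (w t) \<bullet> G (w t))) (at t)"
proof -
  assume t: "0 \<le> t"
  have "((\<lambda>\<tau>. Lf (w \<tau>)) has_real_derivative (G (w t) \<bullet> - G (w t))) (at t)"
    by (rule comp_grad_deriv[of Lf G "w t" w "- G (w t)" t, OF grad wd[OF t] refl])
  then show ?thesis by simp
qed

lemma w_cont: "continuous_on {a..b} w" if "0 \<le> a" for a b
  using wd that by (meson atLeastAtMost_iff continuous_at_imp_continuous_on has_vector_derivative_continuous order_trans)

lemma w_cont_ge: "continuous_on {a..} w" if "0 \<le> a" for a
  using wd that by (meson atLeast_iff continuous_at_imp_continuous_on has_vector_derivative_continuous order_trans)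

lemma Lw_cont: "continuous_on {a..b} (\<lambda>\<tau>. Lf (w \<tau>))" if "0 \<le> a" for a
  using Lw_deriv that by (meson DERIV_isCont atLeastAtMost_iff continuous_at_imp_continuous_on order_trans)

lemma Lw_mono: "0 \<le> s \<Longrightarrow> s \<le> t \<Longrightarrow> Lf (w t) \<le> Lf (w s)"
proof (rule DERIV_nonpos_imp_decreasing_open[OF _ _ Lw_cont])
  fix x assume "0 \<le> s" "s < x"
  then have "((\<lambda>\<tau>. Lf (w \<tau>)) has_real_derivative - (G (w x) \<bullet> G (w x))) (at x)"
    by (intro Lw_deriv) auto
  then show "\<exists>y. ((\<lambda>\<tau>. Lf (w \<tau>)) has_real_derivative y) (at x) \<and> y \<le> 0"
    by (intro exI[of _ "- (G (w x) \<bullet> G (w x))"]) auto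
qed auto

lemma crit_limit:
  assumes lim: "(w \<longlongrightarrow> z) at_top" and lb: "\<And>t. 0 \<le> t \<Longrightarrow> C \<le> Lf (w t)"
  shows "G z = 0"
proof (rule ccontr)
  assume nz: "G z \<noteq> 0"
  define \<delta> where "\<delta> = (G z \<bullet> G z) / 2"
  have dpos: "\<delta> > 0" using nz by (simp add: \<delta>_def)
  have "((\<lambda>t. G (w t) \<bullet> G (w t)) \<longlongrightarrow> G z \<bullet> G z) at_top"
    by (intro tendsto_inner continuous_on_tendsto_compose[OF Gc lim]) auto
  moreover have "\<delta> < G z \<bullet> G z" using dpos by (simp add: \<delta>_def)
  ultimately have "eventually (\<lambda>t. \<delta> < G (w t) \<bullet> G (w t)) at_top"
    by (rule order_tendstoD)
  then obtain T1 where T1: "\<And>t. t \<ge> T1 \<Longrightarrow> \<delta> < G (w t) \<bullet> G (w t)"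
    by (auto simp: eventually_at_top_linorder)
  define T where "T = max T1 0"
  have T: "T \<ge> 0" "T \<ge> T1" by (auto simp: T_def)
  have dec: "Lf (w t) + \<delta> * t \<le> Lf (w T) + \<delta> * T" if "t \<ge> T" for t
  proof (rule DERIV_nonpos_imp_decreasing_open[OF that])
    fix x assume x: "T < x" "x < t"
    have "((\<lambda>\<tau>. Lf (w \<tau>) + \<delta> * \<tau>) has_real_derivative (- (G (w x) \<bullet> G (w x)) + \<delta> * 1)) (at x)"
      by (intro derivative_intros Lw_deriv) (use x T in auto)
    moreover have "- (G (w x) \<bullet> G (w x)) + \<delta> * 1 \<le> 0" using T1[of x] x T by auto
    ultimately show "\<exists>y. ((\<lambda>\<tau>. Lf (w \<tau>) + \<delta> * \<tau>) has_real_derivative y) (at x) \<and> y \<le> 0" by blast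
  next
    show "continuous_on {T..t} (\<lambda>\<tau>. Lf (w \<tau>) + \<delta> * \<tau>)"
      by (intro continuous_intros Lw_cont T)
  qed
  define t where "t = T + (Lf (w T) - C + 1) / \<delta>"
  have "Lf (w T) \<ge> C" using lb T by auto
  then have tT: "t \<ge> T" unfolding t_def using dpos by auto
  have "C \<le> Lf (w t)" using lb tT T by auto
  also have "\<dots> \<le> Lf (w T) + \<delta> * T - \<delta> * t" using dec[OF tT] by simp
  also have "\<dots> = C - 1" unfolding t_def using dpos by (simp add: field_simps)
  finally show False by simp
qed

end

lemma inner_sgn_self: "sgn x \<bullet> x = norm (x::'a::real_inner)"
  by (cases "x = 0") (simp_all add: sgn_div_norm power2_norm_eq_inner[symmetric] power2_eq_square)

lemma norm_sgn_le: "norm (sgn (x::'a::real_normed_vector)) \<le> 1"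
  by (cases "x = 0") (simp_all add: norm_sgn)

context gflow
begin

lemma converge:
  assumes bd: "bounded (w ` {0..})" and loj: "\<And>x. lojasiewicz_at Lf G x"
  shows "\<exists>z. G z = 0 \<and> (w \<longlongrightarrow> z) at_top"
proof -
  have "bounded (range (\<lambda>n::nat. w (real n)))"
    by (rule bounded_subset[OF bd]) auto
  from bounded_imp_convergent_subsequence[OF this]
  obtain z r where r: "strict_mono r" and lim: "((\<lambda>n. w (real (r n))) \<longlongrightarrow> z) sequentially"
    by (auto simp: o_def)
  have Lc: "continuous_on UNIV Lf"
    using grad by (meson has_derivative_continuous continuous_at_imp_continuous_on)
  have limL: "((\<lambda>n. Lf (w (real (r n)))) \<longlongrightarrow> Lf z) sequentially"
    by (rule continuous_on_tendsto_compose[OF Lc lim]) auto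
  have rge: "real n \<le> real (r n)" for n using seq_suble[OF r, of n] by simp
  have Lge: "Lf z \<le> Lf (w t)" if t: "0 \<le> t" for t
  proof (rule LIMSEQ_le_const2[OF limL])
    obtain n::nat where "t \<le> real n" using real_arch_simple by blast
    then have "\<forall>m\<ge>n. Lf (w (real (r m))) \<le> Lf (w t)"
      using rge t by (smt (verit) Lw_mono of_nat_mono)
    then show "\<exists>N. \<forall>m\<ge>N. Lf (w (real (r m))) \<le> Lf (w t)" by blast
  qed
  have accum: "\<exists>t\<ge>T. norm (w t - z) < e" if "e > 0" for T e
  proof -
    obtain N where N: "\<And>n. n \<ge> N \<Longrightarrow> dist (w (real (r n))) z < e"
      using lim \<open>e > 0\<close> unfolding LIMSEQ_def by blast
    obtain n::nat where n: "T \<le> real n" "n \<ge> N"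
      by (metis nat_le_real_less of_nat_le_iff order.trans real_arch_simple linear)
    show ?thesis using N[OF n(2)] n(1) rge[of n] by (intro exI[of _ "real (r n)"]) (auto simp: dist_norm)
  qed
  have Ltend: "((\<lambda>t. Lf (w t)) \<longlongrightarrow> Lf z) at_top"
  proof (rule tendstoI)
    fix e :: real assume e: "e > 0"
    obtain N where N: "\<And>n. n \<ge> N \<Longrightarrow> dist (Lf (w (real (r n)))) (Lf z) < e"
      using limL e unfolding LIMSEQ_def by blast
    have "dist (Lf (w t)) (Lf z) < e" if "t \<ge> real (r N)" for t
    proof -
      have "Lf (w t) \<le> Lf (w (real (r N)))" using that by (intro Lw_mono) auto
      moreover have "Lf z \<le> Lf (w t)" using that by (intro Lge) (meson of_nat_0_le_iff order_trans)
      ultimately show ?thesis using N[of N] by (simp add: dist_real_def)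
    qed
    then show "eventually (\<lambda>t. dist (Lf (w t)) (Lf z) < e) at_top"
      by (auto simp: eventually_at_top_linorder)
  qed
  show ?thesis
  proof (cases "\<exists>t1\<ge>0. Lf (w t1) = Lf z")
    case True
    then obtain t1 where t1: "t1 \<ge> 0" "Lf (w t1) = Lf z" by blast
    have Lconst: "Lf (w t) = Lf z" if "t \<ge> t1" for t
      using Lw_mono[OF t1(1) that] Lge[of t] that t1 by auto
    have G0: "G (w t) = 0" if "t > t1" for t
    proof -
      have "((\<lambda>\<tau>. Lf (w \<tau>)) has_real_derivative - (G (w t) \<bullet> G (w t))) (at t)"
        using that t1 by (intro Lw_deriv) auto
      moreover have "((\<lambda>\<tau>. Lf (w \<tau>)) has_real_derivative 0) (at t)"
      proof (rule has_field_derivative_transform_within_open[OF DERIV_const[of "Lf z"] open_greaterThan[of t1]])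
        show "t \<in> {t1<..}" using that by simp
        show "\<And>y. y \<in> {t1<..} \<Longrightarrow> Lf z = Lf (w y)" using Lconst by auto
      qed
      ultimately have "G (w t) \<bullet> G (w t) = 0" using DERIV_unique by fastforce
      then show ?thesis by simp
    qed
    have wconst: "w t = w t1" if "t \<ge> t1" for t
    proof (cases "t = t1")
      case False
      then have tt: "t1 < t" using that by simp
      obtain x where x: "x \<in> {t1<..<t}" "norm (w t - w t1) \<le> norm ((\<lambda>h. h *\<^sub>R - G (w x)) (t - t1))"
        using mvt_general[OF tt w_cont[OF t1(1)], of "\<lambda>x h. h *\<^sub>R - G (w x)"]
          wd t1 by (auto simp: has_vector_derivative_def)
      then show ?thesis using G0[of x] by simp
    qed simp
    have "(w \<longlongrightarrow> w t1) at_top"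
      by (rule tendsto_eventually) (auto simp: eventually_at_top_linorder intro!: exI[of _ t1] wconst)
    moreover have "G (w t1) = 0"
      using crit_limit[OF calculation Lge] .
    ultimately show ?thesis by blast
  next
    case False
    then have Lgt: "Lf z < Lf (w t)" if "t \<ge> 0" for t using Lge[OF that] that by fastforce
    obtain U c \<mu> where U: "open U" "z \<in> U" and c: "c > 0" and mu: "0 \<le> \<mu>" "\<mu> < 1"
      and ineq: "\<And>y. y \<in> U \<Longrightarrow> loj_pow \<bar>Lf z - Lf y\<bar> \<mu> \<le> c * norm (G y)"
      using loj[of z] unfolding lojasiewicz_at_def by blast
    obtain rr where rr: "rr > 0" "ball z rr \<subseteq> U" using U open_contains_ball by blast
    define K where "K = c / (1 - \<mu>)"
    have Kpos: "K > 0" using c mu by (simp add: K_def)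
    define \<phi> where "\<phi> t = (Lf (w t) - Lf z) powr (1 - \<mu>)" for t
    have phi_nn: "0 \<le> \<phi> t" for t by (simp add: \<phi>_def)
    define \<phi>' where "\<phi>' t = (1 - \<mu>) * (Lf (w t) - Lf z) powr (1 - \<mu> - 1) * (- (G (w t) \<bullet> G (w t)))" for t
    have phi_deriv: "(\<phi> has_real_derivative \<phi>' t) (at t)" if "t \<ge> 0" for t
    proof -
      have "((\<lambda>\<tau>. Lf (w \<tau>) - Lf z) has_real_derivative - (G (w t) \<bullet> G (w t)) - 0) (at t)"
        by (intro derivative_intros Lw_deriv that)
      from DERIV_chain2[OF has_real_derivative_powr[of "Lf (w t) - Lf z" "1 - \<mu>"] this]
      show ?thesis using Lgt[OF that] unfolding \<phi>_def \<phi>'_def by (simp add: mult.commute mult.left_commute)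
    qed
    have key: "K * \<phi>' t \<le> - norm (G (w t))" if "t \<ge> 0" "w t \<in> U" for t
    proof -
      define D where "D = Lf (w t) - Lf z"
      define g where "g = norm (G (w t))"
      have Dpos: "D > 0" using Lgt[OF that(1)] by (simp add: D_def)
      have lp: "D powr \<mu> \<le> c * g"
        using ineq[OF that(2)] Dpos unfolding loj_pow_def D_def g_def
        by (auto split: if_splits simp: abs_minus_commute)
      have "\<phi>' t = - ((1 - \<mu>) * (g * g) / D powr \<mu>)"
        unfolding \<phi>'_def D_def[symmetric] g_def
        by (simp add: powr_diff powr_minus divide_simps power2_norm_eq_inner[symmetric] power2_eq_square)
      moreover have "1 - \<mu> \<noteq> 0" "D powr \<mu> \<noteq> 0" using mu Dpos by auto
      ultimately have "K * \<phi>' t = - (c * g * g / D powr \<mu>)"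
        unfolding K_def by simp
      also have "\<dots> \<le> - g"
      proof (cases "g = 0")
        case False
        then have gp: "g > 0" by (simp add: g_def)
        have "D powr \<mu> > 0" using Dpos by simp
        then have "g * D powr \<mu> \<le> c * g * g" using lp gp by (simp add: mult.commute mult_left_mono)
        then have "g \<le> c * g * g / D powr \<mu>" using \<open>D powr \<mu> > 0\<close> by (simp add: field_simps)
        then show ?thesis by simp
      qed simp
      finally show ?thesis by (simp add: g_def)
    qed
    have length: "norm (w b - w a) \<le> K * (\<phi> a - \<phi> b)"
      if ab: "0 \<le> a" "a \<le> b" and inU: "\<And>\<tau>. a < \<tau> \<Longrightarrow> \<tau> < b \<Longrightarrow> w \<tau> \<in> U" for a b
    proof -
      define e where "e = sgn (w b - w a)"
      define p where "p \<tau> = e \<bullet> w \<tau> + K * \<phi> \<tau>" for \<tau>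
      have "p b \<le> p a"
      proof (rule DERIV_nonpos_imp_decreasing_open[OF ab(2)])
        fix x assume x: "a < x" "x < b"
        have "(p has_real_derivative (e \<bullet> - G (w x) + K * \<phi>' x)) (at x)"
          unfolding p_def using x ab
          by (intro DERIV_add inner_const_deriv wd DERIV_cmult phi_deriv) auto
        moreover have "e \<bullet> - G (w x) + K * \<phi>' x \<le> 0"
        proof -
          have "e \<bullet> - G (w x) \<le> norm e * norm (G (w x))"
            using Cauchy_Schwarz_ineq2[of e "- G (w x)"] by simp
          also have "\<dots> \<le> norm (G (w x))" unfolding e_def
            using norm_sgn_le mult_right_mono[OF norm_sgn_le[of "w b - w a"]] by simp
          finally show ?thesis using key[of x] x ab inU[OF x] by simp
        qed
        ultimately show "\<exists>y. (p has_real_derivative y) (at x) \<and> y \<le> 0" by blast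
      next
        have "continuous_on {a..b} \<phi>"
          using phi_deriv ab by (meson DERIV_isCont atLeastAtMost_iff continuous_at_imp_continuous_on order_trans)
        then show "continuous_on {a..b} p"
          unfolding p_def by (intro continuous_intros w_cont ab)
      qed
      then have "e \<bullet> (w b - w a) \<le> K * (\<phi> a - \<phi> b)"
        unfolding p_def by (simp add: inner_diff_right algebra_simps)
      then show ?thesis unfolding e_def inner_sgn_self .
    qed
    have phi_tend: "(\<phi> \<longlongrightarrow> 0) at_top"
      unfolding \<phi>_def
    proof (rule tendsto_zero_powrI)
      show "((\<lambda>t. Lf (w t) - Lf z) \<longlongrightarrow> 0) at_top"
        using Ltend by (rule LIM_zero)
      show "((\<lambda>t. 1 - \<mu>) \<longlongrightarrow> 1 - \<mu>) at_top" by simp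
      show "\<forall>\<^sub>F t in at_top. 0 \<le> Lf (w t) - Lf z"
        using Lge by (auto simp: eventually_at_top_linorder intro!: exI[of _ 0])
      show "0 < 1 - \<mu>" using mu by simp
    qed
    have "eventually (\<lambda>t. K * \<phi> t < rr / 2) at_top"
    proof -
      have "((\<lambda>t. K * \<phi> t) \<longlongrightarrow> K * 0) at_top" by (intro tendsto_mult tendsto_const phi_tend)
      then show ?thesis using rr by (intro order_tendstoD) auto
    qed
    then obtain T0 where T0: "\<And>t. t \<ge> T0 \<Longrightarrow> K * \<phi> t < rr / 2"
      by (auto simp: eventually_at_top_linorder)
    obtain t0 where t0: "t0 \<ge> max T0 0" "norm (w t0 - z) < rr / 2"
      using accum[of "rr/2" "max T0 0"] rr by auto
    have t0pos: "t0 \<ge> 0" using t0 by simp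
    have stay: "norm (w t - z) < rr" if "t \<ge> t0" for t
    proof (rule ccontr)
      assume "\<not> norm (w t - z) < rr"
      define A where "A = {t0..} \<inter> w -` (- ball z rr)"
      have tA: "t \<in> A" using that \<open>\<not> norm (w t - z) < rr\<close> by (auto simp: A_def dist_norm norm_minus_commute)
      have Acl: "closed A" unfolding A_def
        by (rule continuous_closed_preimage[OF w_cont_ge[OF t0pos]]) auto
      have Abdd: "bdd_below A" unfolding A_def by (rule bdd_belowI[of _ t0]) auto
      define T where "T = Inf A"
      have TA: "T \<in> A" unfolding T_def using closed_contains_Inf[OF _ Abdd Acl] tA by blast
      have T: "t0 \<le> T" "rr \<le> norm (w T - z)"
        using TA by (auto simp: A_def dist_norm norm_minus_commute)
      have before: "w \<tau> \<in> U" if "t0 \<le> \<tau>" "\<tau> < T" for \<tau>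
      proof -
        have "\<tau> \<notin> A"
        proof
          assume "\<tau> \<in> A"
          then have "T \<le> \<tau>" unfolding T_def by (rule cInf_lower[OF _ Abdd])
          then show False using that by simp
        qed
        then have "w \<tau> \<in> ball z rr" using that by (auto simp: A_def)
        then show ?thesis using rr by auto
      qed
      have "norm (w T - w t0) \<le> K * (\<phi> t0 - \<phi> T)"
        by (rule length[OF t0pos T(1)]) (use before in auto)
      also have "\<dots> \<le> K * \<phi> t0" using Kpos phi_nn[of T] by (simp add: mult_left_mono)
      also have "\<dots> < rr / 2" using T0 t0 by simp
      finally have "norm (w T - w t0) < rr / 2" .
      then have "norm (w T - z) < rr"
        using t0(2) norm_triangle_lt[of "w T - w t0" "w t0 - z" rr] by simp
      then show False using T by simp
    qed
    have bound: "norm (w t - z) \<le> K * \<phi> t" if "t \<ge> t0" for t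
    proof (rule field_le_epsilon)
      fix e :: real assume e: "e > 0"
      obtain t' where t': "t' \<ge> t" "norm (w t' - z) < e" using accum[OF e] by blast
      have "norm (w t' - w t) \<le> K * (\<phi> t - \<phi> t')"
        by (rule length) (use that t0pos t' stay rr in \<open>auto simp: dist_norm norm_minus_commute subset_iff\<close>)
      also have "\<dots> \<le> K * \<phi> t" using Kpos phi_nn[of t'] by (simp add: mult_left_mono)
      finally have "norm (w t' - w t) \<le> K * \<phi> t" .
      then show "norm (w t - z) \<le> K * \<phi> t + e"
        using t'(2) norm_triangle_ineq[of "w t - w t'" "w t' - z"] by (simp add: norm_minus_commute)
    qed
    have "(w \<longlongrightarrow> z) at_top"
    proof (rule LIM_zero_cancel, rule Lim_null_comparison)
      show "\<forall>\<^sub>F t in at_top. norm (w t - z) \<le> K * \<phi> t"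
        using bound by (auto simp: eventually_at_top_linorder)
      show "((\<lambda>t. K * \<phi> t) \<longlongrightarrow> 0) at_top"
        using tendsto_mult[OF tendsto_const phi_tend, of K] by simp
    qed
    moreover have "G z = 0" using crit_limit[OF calculation Lge] .
    ultimately show ?thesis by blast
  qed
qed

end

lemma net_mat_cong:
  assumes "\<And>i n. i \<in> {1..j} \<Longrightarrow> n < k i \<Longrightarrow> F i n = F' i n"
  shows "net_mat d k s F j = net_mat d k s F' j"
  using assms
proof (induction j)
  case 0
  then show ?case by simp
next
  case (Suc j)
  have IH: "net_mat d k s F j = net_mat d k s F' j" using Suc by auto
  have "conv_mat (k (Suc j)) (s (Suc j)) (F (Suc j)) = conv_mat (k (Suc j)) (s (Suc j)) (F' (Suc j))"
    unfolding conv_mat_def using Suc.prems[of "Suc j"] by (intro ext) auto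
  then show ?case using IH by simp
qed

lemma net_mat_scale:
  "net_mat d k s (\<lambda>i n. a i * F i n) j r c = (\<Prod>i\<in>{1..j}. a i) * net_mat d k s F j r c"
proof (induction j arbitrary: r c)
  case 0
  then show ?case by simp
next
  case (Suc j)
  have cm: "conv_mat kk ss (\<lambda>n. b * w n) r t = b * conv_mat kk ss w r t" for kk ss b w r t
    unfolding conv_mat_def by simp
  have "net_mat d k s (\<lambda>i n. a i * F i n) (Suc j) r c
      = (\<Sum>t<d j. a (Suc j) * conv_mat (k (Suc j)) (s (Suc j)) (F (Suc j)) r t * ((\<Prod>i\<in>{1..j}. a i) * net_mat d k s F j t c))"
    by (simp add: mat_mult_def cm Suc.IH)
  also have "\<dots> = (a (Suc j) * (\<Prod>i\<in>{1..j}. a i)) * net_mat d k s F (Suc j) r c"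
    by (simp add: mat_mult_def sum_distrib_left mult_ac)
  also have "a (Suc j) * (\<Prod>i\<in>{1..j}. a i) = (\<Prod>i\<in>{1..Suc j}. a i)"
    by (simp add: prod.cl_ivl_Suc mult.commute)
  finally show ?case .
qed

lemma net_mat_cont:
  fixes pidx :: "nat \<Rightarrow> 'n::finite"
  shows "continuous_on UNIV (\<lambda>x::real^'n. net_mat d k s (filters_of k pidx x) j r c)"
proof (induction j arbitrary: r c)
  case 0
  then show ?case by simp
next
  case (Suc j)
  have cc: "continuous_on UNIV (\<lambda>x::real^'n. conv_mat kk ss (filters_of k pidx x i) r t)" for kk ss i r t
    unfolding conv_mat_def filters_of_def by (cases "r * ss \<le> t \<and> t < r * ss + kk") (auto intro!: continuous_intros)
  show ?case
    unfolding net_mat.simps mat_mult_def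
    by (intro continuous_on_sum continuous_on_mult cc Suc.IH)
qed

lemma arch_nat:
  assumes arch: "architecture N d k s" and i: "i \<in> {1..N}"
  shows "d (i - 1) = (d i - 1) * s i + k i" and "0 < s i" and "0 < k i" and "0 < d i"
proof -
  have A: "0 < s i" "0 < k i" "real (d i) = (real (d (i - 1)) - real (k i)) / real (s i) + 1" "0 < d i"
    using arch i unfolding architecture_def by auto
  then have "real (d i) - 1 = (real (d (i - 1)) - real (k i)) / real (s i)" by simp
  then have "(real (d i) - 1) * real (s i) = real (d (i - 1)) - real (k i)" using A(1) by (simp add: field_simps)
  then have "real (d (i - 1)) = real ((d i - 1) * s i + k i)" using A(4) by (simp add: of_nat_diff)
  then show "d (i - 1) = (d i - 1) * s i + k i" by (simp only: of_nat_eq_iff)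
  show "0 < s i" "0 < k i" "0 < d i" using A by auto
qed

lemma net_mat_lowest:
  assumes arch: "architecture N d k s"
    and nz: "\<And>i. i \<in> {1..N} \<Longrightarrow> \<exists>n<k i. F i n \<noteq> 0"
    and nmin_def: "\<And>i. nmin i = (LEAST n. F i n \<noteq> 0)"
    and S'_def: "\<And>i. S' i = (\<Prod>j\<in>{1..<i}. s j)"
    and cj_def: "\<And>j. cj j = (\<Sum>i\<in>{1..j}. nmin i * S' i)"
    and P_def: "\<And>j. P j = (\<Prod>i\<in>{1..j}. F i (nmin i))"
  shows "j \<le> N \<Longrightarrow> t < d j \<Longrightarrow> (\<forall>c < t * S' (Suc j) + cj j. net_mat d k s F j t c = 0) \<and>
           net_mat d k s F j t (t * S' (Suc j) + cj j) = P j"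
proof (induction j arbitrary: t)
  case 0
  have "S' (Suc 0) = 1" "cj 0 = 0" "P 0 = 1" by (simp_all add: S'_def cj_def P_def)
  then show ?case by simp
next
  case (Suc j)
  have iN: "Suc j \<in> {1..N}" using Suc.prems by simp
  define ss where "ss = s (Suc j)"
  define kk where "kk = k (Suc j)"
  define f where "f = F (Suc j)"
  define nm where "nm = nmin (Suc j)"
  define Sj where "Sj = S' (Suc j)"
  have dj: "d j = (d (Suc j) - 1) * ss + kk" using arch_nat(1)[OF arch iN] by (simp add: ss_def kk_def)
  have win: "t * ss + kk \<le> d j"
  proof -
    have "t \<le> d (Suc j) - 1" using Suc.prems by simp
    then have "t * ss \<le> (d (Suc j) - 1) * ss" by simp
    then show ?thesis using dj by simp
  qed
  have Sjpos: "Sj \<ge> 1"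
  proof -
    have "\<forall>i\<in>{1..<Suc j}. 0 < s i" using arch_nat(2)[OF arch] Suc.prems by auto
    then have "0 < (\<Prod>i\<in>{1..<Suc j}. s i)" by (simp add: prod_pos)
    then show ?thesis by (simp add: Sj_def S'_def)
  qed
  have S'Suc: "S' (Suc (Suc j)) = Sj * ss"
    by (simp add: S'_def Sj_def ss_def prod.atLeastLessThan_Suc)
  have cjSuc: "cj (Suc j) = cj j + nm * Sj"
    by (simp add: cj_def nm_def Sj_def)
  have PSuc: "P (Suc j) = P j * f nm"
    by (simp add: P_def f_def nm_def)
  obtain n0 where n0: "n0 < kk" "f n0 \<noteq> 0" using nz[OF iN] by (auto simp: kk_def f_def)
  have fnm: "f nm \<noteq> 0" using LeastI[of "\<lambda>n. F (Suc j) n \<noteq> 0" n0] n0(2) by (simp add: nm_def nmin_def f_def)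
  have nm_le: "nm \<le> n" if "f n \<noteq> 0" for n using Least_le[of "\<lambda>n. F (Suc j) n \<noteq> 0" n] that by (simp add: nm_def nmin_def f_def)
  have nmk: "nm < kk" using nm_le[OF n0(2)] n0(1) by simp
  have IH0: "net_mat d k s F j u c = 0" if "u < d j" "c < u * Sj + cj j" for u c
    using Suc.IH[of u] Suc.prems that by (auto simp: Sj_def)
  have IH1: "net_mat d k s F j u (u * Sj + cj j) = P j" if "u < d j" for u
    using Suc.IH[of u] Suc.prems that by (auto simp: Sj_def)
  have expand: "net_mat d k s F (Suc j) t c
      = (\<Sum>u<d j. (if t * ss \<le> u \<and> u < t * ss + kk then f (u - t * ss) else 0) * net_mat d k s F j u c)" for c
    unfolding ss_def kk_def f_def by (simp add: mat_mult_def conv_mat_def)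
  define u0 where "u0 = t * ss + nm"
  have u0d: "u0 < d j" using nmk win by (simp add: u0_def)
  have target: "t * S' (Suc (Suc j)) + cj (Suc j) = u0 * Sj + cj j"
    by (simp add: S'Suc cjSuc u0_def algebra_simps)
  have zero_terms: "(if t * ss \<le> u \<and> u < t * ss + kk then f (u - t * ss) else 0) * net_mat d k s F j u c = 0"
    if "u < d j" "c < u0 * Sj + cj j" "u \<noteq> u0 \<or> c \<noteq> u0 * Sj + cj j" "c \<le> u0 * Sj + cj j" for u c
  proof (cases "t * ss \<le> u \<and> u < t * ss + kk \<and> f (u - t * ss) \<noteq> 0")
    case True
    then have "nm \<le> u - t * ss" using nm_le by blast
    then have uu: "u0 \<le> u" using True unfolding u0_def by arith
    have "c < u * Sj + cj j"
    proof (cases "u = u0")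
      case True then show ?thesis using that by simp
    next
      case False
      then have "u0 + 1 \<le> u" using uu by simp
      then have "(u0 + 1) * Sj \<le> u * Sj" by (rule mult_le_mono1)
      then show ?thesis using that(4) Sjpos by (simp add: algebra_simps)
    qed
    then show ?thesis using IH0[OF that(1)] by simp
  qed auto
  have zero_terms2: "(if t * ss \<le> u \<and> u < t * ss + kk then f (u - t * ss) else 0) * net_mat d k s F j u c = 0"
    if "u < d j" "c \<le> u0 * Sj + cj j" "u \<noteq> u0" for u c
  proof (cases "c < u0 * Sj + cj j")
    case True then show ?thesis using zero_terms that by blast
  next
    case False
    then have c: "c = u0 * Sj + cj j" using that by simp
    show ?thesis
    proof (cases "t * ss \<le> u \<and> u < t * ss + kk \<and> f (u - t * ss) \<noteq> 0")
      case True
      then have "nm \<le> u - t * ss" using nm_le by blast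
      then have "u0 \<le> u" using True unfolding u0_def by arith
      then have "u0 < u" using that(3) by simp
      then have le1: "(u0 + 1) * Sj \<le> u * Sj" using mult_le_mono1[of "u0 + 1" u Sj] by simp
      have "(u0 + 1) * Sj = u0 * Sj + Sj" by simp
      then have "c < u * Sj + cj j" using le1 c Sjpos \<open>(u0 + 1) * Sj = u0 * Sj + Sj\<close> by linarith
      then show ?thesis using IH0[OF that(1)] by simp
    qed auto
  qed
  show ?case
  proof
    show "\<forall>c < t * S' (Suc (Suc j)) + cj (Suc j). net_mat d k s F (Suc j) t c = 0"
    proof (intro allI impI)
      fix c assume "c < t * S' (Suc (Suc j)) + cj (Suc j)"
      then have c: "c < u0 * Sj + cj j" using target by simp
      show "net_mat d k s F (Suc j) t c = 0"
        unfolding expand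
      proof (rule sum.neutral, intro ballI)
        fix u assume "u \<in> {..<d j}"
        show "(if t * ss \<le> u \<and> u < t * ss + kk then f (u - t * ss) else 0) * net_mat d k s F j u c = 0"
          using zero_terms[of u c] \<open>u \<in> {..<d j}\<close> c by auto
      qed
    qed
    have "net_mat d k s F (Suc j) t (u0 * Sj + cj j)
        = (if t * ss \<le> u0 \<and> u0 < t * ss + kk then f (u0 - t * ss) else 0) * net_mat d k s F j u0 (u0 * Sj + cj j)
          + (\<Sum>u\<in>{..<d j} - {u0}. (if t * ss \<le> u \<and> u < t * ss + kk then f (u - t * ss) else 0) * net_mat d k s F j u (u0 * Sj + cj j))"
      unfolding expand by (rule sum.remove) (use u0d in auto)
    also have "(\<Sum>u\<in>{..<d j} - {u0}. (if t * ss \<le> u \<and> u < t * ss + kk then f (u - t * ss) else 0) * net_mat d k s F j u (u0 * Sj + cj j)) = 0"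
      by (rule sum.neutral) (use zero_terms2 in auto)
    also have "(if t * ss \<le> u0 \<and> u0 < t * ss + kk then f (u0 - t * ss) else 0) = f nm"
      using nmk by (simp add: u0_def)
    also have "net_mat d k s F j u0 (u0 * Sj + cj j) = P j" by (rule IH1[OF u0d])
    finally show "net_mat d k s F (Suc j) t (t * S' (Suc (Suc j)) + cj (Suc j)) = P (Suc j)"
      using target PSuc by simp
  qed
qed

lemma net_mat_nonzero:
  assumes arch: "architecture N d k s" and N1: "1 \<le> N"
    and nz: "\<And>i. i \<in> {1..N} \<Longrightarrow> \<exists>n<k i. F i n \<noteq> 0"
  shows "\<exists>c < kv N k s. net_mat d k s F N 0 c \<noteq> 0"
proof -
  define nmin where "nmin i = (LEAST n. F i n \<noteq> 0)" for i
  define S' where "S' i = (\<Prod>j\<in>{1..<i}. s j)" for i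
  define cj where "cj j = (\<Sum>i\<in>{1..j}. nmin i * S' i)" for j
  define P where "P j = (\<Prod>i\<in>{1..j}. F i (nmin i))" for j
  have dN: "0 < d N" using arch_nat(4)[OF arch, of N] N1 by simp
  have L: "net_mat d k s F N 0 (0 * S' (Suc N) + cj N) = P N"
    using net_mat_lowest[OF arch nz nmin_def S'_def cj_def P_def, of N 0] dN by blast
  have Fn: "F i (nmin i) \<noteq> 0" if iN: "i \<in> {1..N}" for i
  proof -
    obtain n where "F i n \<noteq> 0" using nz[OF iN] by blast
    then show ?thesis using LeastI[of "\<lambda>n. F i n \<noteq> 0" n] by (simp add: nmin_def)
  qed
  have nmk: "nmin i < k i" if iN: "i \<in> {1..N}" for i
  proof -
    obtain n where "n < k i" "F i n \<noteq> 0" using nz[OF iN] by blast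
    then show ?thesis using Least_le[of "\<lambda>n. F i n \<noteq> 0" n] by (simp add: nmin_def)
  qed
  have "P N \<noteq> 0" unfolding P_def using Fn by (simp add: prod_zero_iff)
  moreover have "cj N < kv N k s"
  proof -
    have split: "{1..N} = insert 1 {2..N}" using N1 by auto
    have "cj N = nmin 1 * S' 1 + (\<Sum>i\<in>{2..N}. nmin i * S' i)"
      unfolding cj_def split by simp
    also have "\<dots> < k 1 + (\<Sum>i\<in>{2..N}. (k i - 1) * (\<Prod>j\<in>{1..<i}. s j))"
    proof (rule add_less_le_mono)
      show "nmin 1 * S' 1 < k 1" using nmk[of 1] N1 by (simp add: S'_def)
      show "(\<Sum>i\<in>{2..N}. nmin i * S' i) \<le> (\<Sum>i\<in>{2..N}. (k i - 1) * (\<Prod>j\<in>{1..<i}. s j))"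
        unfolding S'_def
      proof (intro sum_mono mult_right_mono)
        fix i assume "i \<in> {2..N}"
        then have "nmin i < k i" using nmk by auto
        then show "nmin i \<le> k i - 1" by simp
      qed simp
    qed
    finally show ?thesis by (simp add: kv_def)
  qed
  ultimately show ?thesis using L by auto
qed

definition off :: "(nat \<Rightarrow> nat) \<Rightarrow> nat \<Rightarrow> nat" where
  "off k i = (\<Sum>j\<in>{1..<i}. k j)"

lemma off_Suc: "1 \<le> i \<Longrightarrow> off k (Suc i) = off k i + k i"
  by (simp add: off_def sum.atLeastLessThan_Suc)

lemma off_1: "off k 1 = 0" by (simp add: off_def)

lemma off_kbar: "off k (Suc N) = kbar N k"
  by (simp add: off_def kbar_def atLeastLessThanSuc_atLeastAtMost)

lemma off_mono: "i \<le> j \<Longrightarrow> off k i \<le> off k j"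
  unfolding off_def by (rule sum_mono2) auto

lemma off_cover: "p < off k (Suc M) \<Longrightarrow> \<exists>i\<in>{1..M}. off k i \<le> p \<and> p < off k (Suc i)"
proof (induction M)
  case 0 then show ?case by (simp add: off_def)
next
  case (Suc M)
  show ?case
  proof (cases "p < off k (Suc M)")
    case True then show ?thesis using Suc.IH by force
  next
    case False
    then show ?thesis using Suc.prems by (intro bexI[of _ "Suc M"]) auto
  qed
qed

lemma sum_blocks: "(\<Sum>p<off k (Suc M). f p) = (\<Sum>i\<in>{1..M}. \<Sum>p\<in>{off k i..<off k (Suc i)}. f p)"
proof (induction M)
  case 0 then show ?case by (simp add: off_def)
next
  case (Suc M)
  have "(\<Sum>p<off k (Suc (Suc M)). f p) = (\<Sum>p\<in>{0..<off k (Suc M)}. f p) + (\<Sum>p\<in>{off k (Suc M)..<off k (Suc (Suc M))}. f p)"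
    unfolding atLeast0LessThan[symmetric] by (rule sum.atLeastLessThan_concat[symmetric]) (auto intro: off_mono)
  then show ?case using Suc.IH by (simp add: atLeast0LessThan)
qed

locale blocks =
  fixes N :: nat and k :: "nat \<Rightarrow> nat" and pidx :: "nat \<Rightarrow> 'n::finite"
  assumes bij: "bij_betw pidx {..<kbar N k} UNIV"
begin

definition bset where "bset i = pidx ` {off k i..<off k (Suc i)}"

lemma range_sub: "i \<in> {1..N} \<Longrightarrow> {off k i..<off k (Suc i)} \<subseteq> {..<kbar N k}"
  using off_mono[of "Suc i" "Suc N" k] by (auto simp: off_kbar)

lemma inj: "inj_on pidx {..<kbar N k}" using bij by (simp add: bij_betw_def)

lemma bset_unique:
  assumes "i1 \<in> {1..N}" "i2 \<in> {1..N}" "j \<in> bset i1" "j \<in> bset i2"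
  shows "i1 = i2"
proof -
  obtain p1 where p1: "p1 \<in> {off k i1..<off k (Suc i1)}" "j = pidx p1" using assms by (auto simp: bset_def)
  obtain p2 where p2: "p2 \<in> {off k i2..<off k (Suc i2)}" "j = pidx p2" using assms by (auto simp: bset_def)
  have "p1 = p2" using inj p1 p2 range_sub[OF assms(1)] range_sub[OF assms(2)]
    by (metis inj_on_eq_iff subsetD)
  show ?thesis
  proof (rule ccontr)
    assume "i1 \<noteq> i2"
    then consider "Suc i1 \<le> i2" | "Suc i2 \<le> i1" by linarith
    then show False
    proof cases
      case 1 then show False using off_mono[OF 1, of k] p1 p2 \<open>p1 = p2\<close> by auto
    next
      case 2 then show False using off_mono[OF 2, of k] p1 p2 \<open>p1 = p2\<close> by auto
    qed
  qed
qed

lemma bset_exists: "\<exists>i\<in>{1..N}. j \<in> bset i"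
proof -
  obtain p where p: "p < kbar N k" "j = pidx p" using bij by (metis bij_betw_iff_bijections lessThan_iff UNIV_I)
  then obtain i where "i \<in> {1..N}" "off k i \<le> p" "p < off k (Suc i)"
    using off_cover[of p k N] by (auto simp: off_kbar)
  then show ?thesis using p unfolding bset_def by (intro bexI[of _ i] imageI) auto
qed

definition bof where "bof j = (THE i. i \<in> {1..N} \<and> j \<in> bset i)"

lemma bof: "bof j \<in> {1..N} \<and> j \<in> bset (bof j)"
proof -
  have ex1: "\<exists>!i. i \<in> {1..N} \<and> j \<in> bset i"
    using bset_exists[of j] bset_unique[of _ _ j] by blast
  show ?thesis unfolding bof_def by (rule theI'[OF ex1])
qed

lemma bof_eq: "i \<in> {1..N} \<Longrightarrow> j \<in> bset i \<Longrightarrow> bof j = i"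
  using bof bset_unique by blast

lemma in_bset: "i \<in> {1..N} \<Longrightarrow> n < k i \<Longrightarrow> pidx (off k i + n) \<in> bset i"
  using off_Suc[of i k] by (auto simp: bset_def)

definition msc :: "(nat \<Rightarrow> real) \<Rightarrow> real^'n \<Rightarrow> real^'n" where
  "msc a x = (\<chi> j. a (bof j) * x $ j)"

lemma filters_msc: "i \<in> {1..N} \<Longrightarrow> n < k i \<Longrightarrow> filters_of k pidx (msc a x) i n = a i * filters_of k pidx x i n"
  unfolding filters_of_def msc_def using bof_eq[OF _ in_bset] by (simp add: off_def)

lemma Pi_net_msc: "Pi_net N d k s pidx (msc a x) r c = (\<Prod>i\<in>{1..N}. a i) * Pi_net N d k s pidx x r c"
proof -
  have "net_mat d k s (filters_of k pidx (msc a x)) N = net_mat d k s (\<lambda>i n. a i * filters_of k pidx x i n) N"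
    by (rule net_mat_cong) (simp add: filters_msc)
  then show ?thesis unfolding Pi_net_def by (simp add: net_mat_scale)
qed

lemma ff_msc: "final_filter_l1 N d k s pidx (msc a x) = \<bar>\<Prod>i\<in>{1..N}. a i\<bar> * final_filter_l1 N d k s pidx x"
  unfolding final_filter_l1_def final_filter_def Pi_net_msc by (simp add: abs_mult sum_distrib_left)

definition bn :: "nat \<Rightarrow> real^'n \<Rightarrow> real" where "bn i x = (\<Sum>p\<in>{off k i..<off k (Suc i)}. (x $ pidx p)\<^sup>2)"

lemma bn_msc: "i \<in> {1..N} \<Longrightarrow> bn i (msc a x) = (a i)\<^sup>2 * bn i x"
  unfolding bn_def msc_def sum_distrib_left
proof (rule sum.cong[OF refl])
  fix p assume i: "i \<in> {1..N}" and p: "p \<in> {off k i..<off k (Suc i)}"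
  have "bof (pidx p) = i" using i p by (intro bof_eq) (auto simp: bset_def)
  then show "((\<chi> j. a (bof j) * x $ j) $ pidx p)\<^sup>2 = (a i)\<^sup>2 * (x $ pidx p)\<^sup>2"
    by (simp add: power_mult_distrib)
qed

lemma bn_nonneg: "0 \<le> bn i x" unfolding bn_def by (intro sum_nonneg) simp

lemma norm_sq: "(norm x)\<^sup>2 = (\<Sum>i\<in>{1..N}. bn i x)"
proof -
  have "(norm x)\<^sup>2 = (\<Sum>j\<in>UNIV. (x $ j)\<^sup>2)"
    unfolding power2_norm_eq_inner inner_vec_def by (simp add: power2_eq_square)
  also have "\<dots> = (\<Sum>p<kbar N k. (x $ pidx p)\<^sup>2)"
    by (rule sum.reindex_bij_betw[OF bij, symmetric])
  also have "\<dots> = (\<Sum>i\<in>{1..N}. bn i x)"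
    unfolding off_kbar[symmetric] sum_blocks bn_def ..
  finally show ?thesis .
qed

lemma bn_cont: "continuous_on UNIV (bn i)"
  unfolding bn_def by (intro continuous_on_sum continuous_on_power continuous_on_component continuous_on_id)

definition Bv :: "nat \<Rightarrow> real^'n \<Rightarrow> real^'n" where
  "Bv i x = (\<chi> j. if j \<in> bset i then x $ j else 0)"

lemma path_msc: "i \<in> {1..N} \<Longrightarrow> x + (\<tau> - 1) *\<^sub>R Bv i x = msc (\<lambda>j. if j = i then \<tau> else 1) x"
  unfolding vec_eq_iff
proof
  fix j assume i: "i \<in> {1..N}"
  show "(x + (\<tau> - 1) *\<^sub>R Bv i x) $ j = msc (\<lambda>j. if j = i then \<tau> else 1) x $ j"
  proof (cases "j \<in> bset i")
    case True
    then have "bof j = i" by (rule bof_eq[OF i])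
    then show ?thesis using True by (simp add: Bv_def msc_def algebra_simps)
  next
    case False
    then have "bof j \<noteq> i" using bof by metis
    then show ?thesis using False by (simp add: Bv_def msc_def)
  qed
qed

lemma inner_Bv: "i \<in> {1..N} \<Longrightarrow> y \<bullet> Bv i x = (\<Sum>p\<in>{off k i..<off k (Suc i)}. y $ pidx p * x $ pidx p)"
proof -
  assume i: "i \<in> {1..N}"
  have "y \<bullet> Bv i x = (\<Sum>j\<in>UNIV. if j \<in> bset i then y $ j * x $ j else 0)"
    unfolding Bv_def inner_vec_def by (intro sum.cong) auto
  also have "\<dots> = (\<Sum>j\<in>bset i. y $ j * x $ j)"
    by (simp add: sum.If_cases)
  also have "\<dots> = (\<Sum>p\<in>{off k i..<off k (Suc i)}. y $ pidx p * x $ pidx p)"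
    unfolding bset_def by (rule sum.reindex[unfolded comp_def]) (use inj_on_subset[OF inj range_sub[OF i]] in auto)
  finally show ?thesis .
qed

end

context blocks
begin

lemma path_deriv: "((\<lambda>\<tau>. x + (\<tau> - 1) *\<^sub>R v) has_vector_derivative v) (at t)"
  by (auto intro!: derivative_eq_intros)

lemma Pi_net_path_eq:
  assumes i: "i \<in> {1..N}" and i': "i' \<in> {1..N}"
  shows "Pi_net N d k s pidx (x + (\<tau> - 1) *\<^sub>R Bv i x) = Pi_net N d k s pidx (x + (\<tau> - 1) *\<^sub>R Bv i' x)"
proof -
  have p: "(\<Prod>j\<in>{1..N}. if j = i then \<tau> else 1) = \<tau>" "(\<Prod>j\<in>{1..N}. if j = i' then \<tau> else 1) = \<tau>"
    using i i' by simp_all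
  show ?thesis unfolding path_msc[OF i] path_msc[OF i'] by (intro ext) (simp only: Pi_net_msc p)
qed

lemma loss_path_eq:
  assumes i: "i \<in> {1..N}" and i': "i' \<in> {1..N}"
  shows "train_loss N d k s pidx oidx l m X Y (x + (\<tau> - 1) *\<^sub>R Bv i x) = train_loss N d k s pidx oidx l m X Y (x + (\<tau> - 1) *\<^sub>R Bv i' x)"
  unfolding train_loss_def net_out_def Pi_net_path_eq[OF i i'] ..

lemma grad_block_eq:
  assumes grad: "\<And>x. (train_loss N d k s pidx oidx l m X Y has_derivative (\<lambda>h. G x \<bullet> h)) (at x)"
    and i: "i \<in> {1..N}" and i': "i' \<in> {1..N}"
  shows "G x \<bullet> Bv i x = G x \<bullet> Bv i' x"
proof -
  let ?L = "train_loss N d k s pidx oidx l m X Y"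
  have d1: "((\<lambda>\<tau>. ?L (x + (\<tau> - 1) *\<^sub>R Bv i x)) has_real_derivative G x \<bullet> Bv i x) (at 1)"
    by (rule comp_grad_deriv[of ?L G x "\<lambda>\<tau>. x + (\<tau> - 1) *\<^sub>R Bv i x", OF grad path_deriv]) simp
  have d2: "((\<lambda>\<tau>. ?L (x + (\<tau> - 1) *\<^sub>R Bv i' x)) has_real_derivative G x \<bullet> Bv i' x) (at 1)"
    by (rule comp_grad_deriv[of ?L G x "\<lambda>\<tau>. x + (\<tau> - 1) *\<^sub>R Bv i' x", OF grad path_deriv]) simp
  have "((\<lambda>\<tau>. ?L (x + (\<tau> - 1) *\<^sub>R Bv i x)) has_real_derivative G x \<bullet> Bv i' x) (at 1)"
  proof -
    have eq: "(\<lambda>\<tau>. ?L (x + (\<tau> - 1) *\<^sub>R Bv i x)) = (\<lambda>\<tau>. ?L (x + (\<tau> - 1) *\<^sub>R Bv i' x))"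
      by (rule ext) (rule loss_path_eq[OF i i'])
    show ?thesis using d2 by (simp only: eq)
  qed
  then show ?thesis using d1 DERIV_unique by blast
qed

lemma ff_cont: "continuous_on UNIV (final_filter_l1 N d k s pidx)"
  unfolding final_filter_l1_def final_filter_def Pi_net_def
  by (intro continuous_on_sum continuous_on_rabs net_mat_cont)

lemma ff_nonneg: "0 \<le> final_filter_l1 N d k s pidx x"
  unfolding final_filter_l1_def by (intro sum_nonneg) simp

lemma ff_pos:
  assumes arch: "architecture N d k s" and N1: "1 \<le> N"
    and nz: "\<And>i. i \<in> {1..N} \<Longrightarrow> bn i x \<noteq> 0"
  shows "0 < final_filter_l1 N d k s pidx x"
proof -
  have "\<exists>n<k i. filters_of k pidx x i n \<noteq> 0" if i: "i \<in> {1..N}" for i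
  proof (rule ccontr)
    assume "\<not> (\<exists>n<k i. filters_of k pidx x i n \<noteq> 0)"
    then have z: "x $ pidx (off k i + n) = 0" if "n < k i" for n
      using that by (auto simp: filters_of_def off_def)
    have "bn i x = 0" unfolding bn_def
    proof (rule sum.neutral, intro ballI)
      fix p assume p: "p \<in> {off k i..<off k (Suc i)}"
      then have "p - off k i < k i" using off_Suc[of i k] i by auto
      then have "x $ pidx (off k i + (p - off k i)) = 0" by (rule z)
      then show "(x $ pidx p)\<^sup>2 = 0" using p by simp
    qed
    then show False using nz[OF i] by simp
  qed
  then obtain c where c: "c < kv N k s" "net_mat d k s (filters_of k pidx x) N 0 c \<noteq> 0"
    using net_mat_nonzero[OF arch N1] by blast
  have "0 < \<bar>final_filter N d k s pidx x c\<bar>"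
    using c(2) by (simp add: final_filter_def Pi_net_def)
  also have "\<dots> \<le> final_filter_l1 N d k s pidx x"
    unfolding final_filter_l1_def by (rule member_le_sum) (use c(1) in auto)
  finally show ?thesis .
qed

lemma ff_lower:
  assumes arch: "architecture N d k s" and N1: "1 \<le> N"
  shows "\<exists>mm>0. \<forall>x. mm * (\<Prod>i\<in>{1..N}. sqrt (bn i x)) \<le> final_filter_l1 N d k s pidx x"
proof -
  define S where "S = {x. \<forall>i\<in>{1..N}. bn i x = 1}"
  have S_eq: "S = (\<Inter>i\<in>{1..N}. {x. bn i x = 1})" unfolding S_def by auto
  have closedS: "closed S" unfolding S_eq
    by (intro closed_INT ballI closed_Collect_eq bn_cont continuous_on_const)
  have boundedS: "bounded S"
  proof -
    have "norm x \<le> sqrt (real N)" if "x \<in> S" for x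
    proof -
      have "(norm x)\<^sup>2 = real N" using that norm_sq[of x] by (simp add: S_def)
      then show ?thesis by (metis abs_norm_cancel order_refl real_sqrt_abs)
    qed
    then show ?thesis unfolding bounded_iff by blast
  qed
  have compS: "compact S" using closedS boundedS by (simp add: compact_eq_bounded_closed)
  define a where "a x i = 1 / sqrt (bn i x)" for x i
  have normalize: "msc (a x) x \<in> S" if nz: "\<And>i. i \<in> {1..N} \<Longrightarrow> bn i x \<noteq> 0" for x
    unfolding S_def
  proof (intro CollectI ballI)
    fix i assume i: "i \<in> {1..N}"
    have "0 < bn i x" using nz[OF i] bn_nonneg[of i x] by simp
    then show "bn i (msc (a x) x) = 1" by (simp add: bn_msc[OF i] a_def power_divide)
  qed
  have ff_norm: "final_filter_l1 N d k s pidx x = (\<Prod>i\<in>{1..N}. sqrt (bn i x)) * final_filter_l1 N d k s pidx (msc (a x) x)"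
    if nz: "\<And>i. i \<in> {1..N} \<Longrightarrow> bn i x \<noteq> 0" for x
  proof -
    have pos: "0 < bn i x" if "i \<in> {1..N}" for i using nz[OF that] bn_nonneg[of i x] by simp
    have "(\<Prod>i\<in>{1..N}. sqrt (bn i x)) * (\<Prod>i\<in>{1..N}. a x i) = (\<Prod>i\<in>{1..N}. sqrt (bn i x) * a x i)"
      by (simp add: prod.distrib)
    also have "\<dots> = 1"
    proof (rule prod.neutral, intro ballI)
      fix i assume "i \<in> {1..N}"
      then have "0 < bn i x" by (rule pos)
      then show "sqrt (bn i x) * a x i = 1" by (simp add: a_def)
    qed
    finally have e: "(\<Prod>i\<in>{1..N}. sqrt (bn i x)) * (\<Prod>i\<in>{1..N}. a x i) = 1" .
    have "0 \<le> (\<Prod>i\<in>{1..N}. a x i)" unfolding a_def by (intro prod_nonneg divide_nonneg_nonneg real_sqrt_ge_zero bn_nonneg zero_le_one)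
    then show ?thesis unfolding ff_msc using e by (simp add: mult.assoc[symmetric])
  qed
  show ?thesis
  proof (cases "S = {}")
    case True
    show ?thesis
    proof (intro exI[of _ 1] conjI allI)
      fix x
      show "1 * (\<Prod>i\<in>{1..N}. sqrt (bn i x)) \<le> final_filter_l1 N d k s pidx x"
      proof (cases "\<forall>i\<in>{1..N}. bn i x \<noteq> 0")
        case True
        then show ?thesis using normalize[of x] \<open>S = {}\<close> by blast
      next
        case False
        then have "(\<Prod>i\<in>{1..N}. sqrt (bn i x)) = 0" by (auto simp: prod_zero_iff)
        then show ?thesis using ff_nonneg[of d s x] by (simp del: prod_zero_iff)
      qed
    qed simp
  next
    case False
    obtain x0 where x0: "x0 \<in> S" "\<And>y. y \<in> S \<Longrightarrow> final_filter_l1 N d k s pidx x0 \<le> final_filter_l1 N d k s pidx y"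
      using continuous_attains_inf[OF compS False continuous_on_subset[OF ff_cont[of d s]]] by auto
    have mpos: "0 < final_filter_l1 N d k s pidx x0"
      by (rule ff_pos[OF arch N1]) (use x0(1) in \<open>auto simp: S_def\<close>)
    show ?thesis
    proof (intro exI[of _ "final_filter_l1 N d k s pidx x0"] conjI allI mpos)
      fix x
      show "final_filter_l1 N d k s pidx x0 * (\<Prod>i\<in>{1..N}. sqrt (bn i x)) \<le> final_filter_l1 N d k s pidx x"
      proof (cases "\<forall>i\<in>{1..N}. bn i x \<noteq> 0")
        case True
        have "final_filter_l1 N d k s pidx x0 \<le> final_filter_l1 N d k s pidx (msc (a x) x)"
          using x0(2) normalize True by blast
        moreover have "0 \<le> (\<Prod>i\<in>{1..N}. sqrt (bn i x))" by (intro prod_nonneg real_sqrt_ge_zero bn_nonneg)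
        ultimately show ?thesis using ff_norm[of x] True
          by (metis mult.commute mult_left_mono)
      next
        case False
        then have "(\<Prod>i\<in>{1..N}. sqrt (bn i x)) = 0" by (auto simp: prod_zero_iff)
        then show ?thesis using ff_nonneg[of d s x] by (simp del: prod_zero_iff)
      qed
    qed
  qed
qed

end

lemma comp_deriv:
  fixes u :: "real \<Rightarrow> real^'n"
  assumes "(u has_vector_derivative v) (at t)"
  shows "((\<lambda>\<tau>. u \<tau> $ j) has_real_derivative v $ j) (at t)"
  using inner_const_deriv[OF assms, of "axis j 1"] by (simp add: cart_eq_inner_axis inner_commute)

lemma prod_ge_factor:
  fixes f :: "nat \<Rightarrow> real"
  assumes "finite A" "i \<in> A" "\<And>j. j \<in> A \<Longrightarrow> 1 \<le> f j"
  shows "f i \<le> prod f A"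
proof -
  have "prod f A = f i * prod f (A - {i})" by (rule prod.remove[OF assms(1,2)])
  moreover have "1 \<le> prod f (A - {i})" by (rule prod_ge_1) (use assms in auto)
  moreover have "0 \<le> f i" using assms(3)[OF assms(2)] by simp
  ultimately show ?thesis by (metis mult_left_mono mult.right_neutral)
qed

context blocks
begin

lemma bn_deriv:
  assumes i: "i \<in> {1..N}" and d: "(u has_vector_derivative v) (at t)"
  shows "((\<lambda>\<tau>. bn i (u \<tau>)) has_real_derivative 2 * (v \<bullet> Bv i (u t))) (at t)"
proof -
  have "((\<lambda>\<tau>. \<Sum>p\<in>{off k i..<off k (Suc i)}. (u \<tau> $ pidx p)\<^sup>2) has_real_derivative
          (\<Sum>p\<in>{off k i..<off k (Suc i)}. 2 * (u t $ pidx p) * (v $ pidx p))) (at t)"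
  proof (rule DERIV_sum)
    fix p
    show "((\<lambda>\<tau>. (u \<tau> $ pidx p)\<^sup>2) has_real_derivative 2 * (u t $ pidx p) * (v $ pidx p)) (at t)"
      using DERIV_power[OF comp_deriv[OF d, of "pidx p"], of 2] by (simp add: mult_ac)
  qed
  moreover have "(\<Sum>p\<in>{off k i..<off k (Suc i)}. 2 * (u t $ pidx p) * (v $ pidx p)) = 2 * (v \<bullet> Bv i (u t))"
    unfolding inner_Bv[OF i] by (simp add: sum_distrib_left mult_ac)
  ultimately show ?thesis unfolding bn_def by simp
qed

end

theorem theorem3p4:
  fixes N :: nat and d k s :: "nat \<Rightarrow> nat"
    and pidx :: "nat \<Rightarrow> 'n::finite" and oidx :: "nat \<Rightarrow> 'o::finite"
    and m :: nat and X :: "nat \<Rightarrow> nat \<Rightarrow> real" and Y :: "nat \<Rightarrow> real^'o"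
    and l :: "(real^'o) \<times> (real^'o) \<Rightarrow> real"
    and G :: "real^'n \<Rightarrow> real^'n" and w0 :: "real^'n"
  assumes arch: "architecture N d k s"
    and pidx: "bij_betw pidx {..<kbar N k} UNIV"
    and oidx: "bij_betw oidx {..<d N} UNIV"
    and l_diff: "\<And>p. l differentiable (at p)"
    and grad: "\<And>x. (train_loss N d k s pidx oidx l m X Y has_derivative (\<lambda>h. G x \<bullet> h)) (at x)"
    and C2: "\<exists>G' :: real^'n \<Rightarrow> ((real^'n) \<Rightarrow>\<^sub>L (real^'n)).
               (\<forall>x. (G has_derivative blinfun_apply (G' x)) (at x)) \<and> continuous_on UNIV G'"
    and loj: "\<And>x. lojasiewicz_at (train_loss N d k s pidx oidx l m X Y) G x"
  shows "\<exists>I w.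
     open I \<and> is_interval I \<and> grad_flow_sol G w0 I w \<and>
     (\<forall>J v. open J \<and> is_interval J \<and> grad_flow_sol G w0 J v \<longrightarrow>
            J \<subseteq> I \<and> (\<forall>t\<in>J. v t = w t)) \<and>
     ((\<exists>g :: real \<Rightarrow> real. mono g \<and> (\<forall>t. 0 \<le> g t) \<and>
          (\<forall>x. final_filter_l1 N d k s pidx x \<le> g (train_loss N d k s pidx oidx l m X Y x)))
      \<longrightarrow> {0..} \<subseteq> I \<and> bounded (w ` {0..}) \<and>
          (\<exists>z. G z = 0 \<and> (w \<longlongrightarrow> z) at_top))"
proof -
  let ?L = "train_loss N d k s pidx oidx l m X Y"
  interpret B: blocks N k pidx by unfold_locales (rule pidx)
  have N1: "1 \<le> N"
  proof (rule ccontr)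
    assume "\<not> 1 \<le> N"
    then have "kbar N k = 0" by (simp add: kbar_def)
    then show False using pidx by (simp add: bij_betw_def)
  qed
  obtain G' :: "real^'n \<Rightarrow> ((real^'n) \<Rightarrow>\<^sub>L (real^'n))" where
    G': "\<And>x. (G has_derivative blinfun_apply (G' x)) (at x)" and G'c: "continuous_on UNIV G'"
    using C2 by blast
  have Gc: "continuous_on UNIV G"
    using G' by (meson has_derivative_continuous continuous_at_imp_continuous_on)
  have contF: "continuous_on UNIV (\<lambda>x. - G x)" by (intro continuous_intros Gc)
  have lipF: "loc_lip (\<lambda>x. - G x)"
    unfolding loc_lip_def
  proof
    fix R :: real
    have "compact ((\<lambda>x. norm (G' x)) ` cball 0 R)"
      by (rule compact_continuous_image[OF _ compact_cball]) (intro continuous_on_norm continuous_on_subset[OF G'c] subset_UNIV)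
    from compact_imp_bounded[OF this] obtain B where B0: "\<forall>y\<in>(\<lambda>x. norm (G' x)) ` cball 0 R. norm y \<le> B"
      unfolding bounded_iff by blast
    have B: "norm (G' x) \<le> B" if "x \<in> cball 0 R" for x
    proof -
      have "norm (norm (G' x)) \<le> B" using B0 that by blast
      then show ?thesis by simp
    qed
    have GL: "norm (G x - G y) \<le> B * norm (x - y)" if "norm x \<le> R" "norm y \<le> R" for x y
    proof (rule differentiable_bound[OF convex_cball])
      show "\<And>z. z \<in> cball 0 R \<Longrightarrow> (G has_derivative blinfun_apply (G' z)) (at z within cball 0 R)"
        by (rule has_derivative_at_withinI[OF G'])
      show "\<And>z. z \<in> cball 0 R \<Longrightarrow> onorm (blinfun_apply (G' z)) \<le> B"
        using B by (metis norm_blinfun.rep_eq)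
    qed (use that in \<open>simp_all add: mem_cball_0\<close>)
    show "\<exists>L. \<forall>x y. norm x \<le> R \<longrightarrow> norm y \<le> R \<longrightarrow> norm (- G x - - G y) \<le> L * norm (x - y)"
    proof (intro exI[of _ B] allI impI)
      fix x y :: "real^'n" assume xy: "norm x \<le> R" "norm y \<le> R"
      have "norm (- G x - - G y) = norm (G x - G y)" by (simp add: norm_minus_commute)
      then show "norm (- G x - - G y) \<le> B * norm (x - y)" using GL[OF xy] by simp
    qed
  qed
  have gs: "grad_flow_sol G w0 J v \<longleftrightarrow> gsol (\<lambda>x. - G x) w0 J v" for J v
    by (simp add: grad_flow_sol_def gsol_def)
  obtain I w where I: "open I" "is_interval I" and sol: "gsol (\<lambda>x. - G x) w0 I w"
    and max: "\<forall>J v. open J \<and> is_interval J \<and> gsol (\<lambda>x. - G x) w0 J v \<longrightarrow> J \<subseteq> I \<and> (\<forall>t\<in>J. v t = w t)"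
    using ode_maximal[OF lipF contF, of w0] by blast
  have I0: "0 \<in> I" and w00: "w 0 = w0" and wd: "\<And>t. t \<in> I \<Longrightarrow> (w has_vector_derivative - G (w t)) (at t)"
    using sol by (auto simp: gsol_def)
  have Isub: "{0..t} \<subseteq> I" if "t \<in> I" "0 \<le> t" for t
  proof
    fix x assume "x \<in> {0..t}"
    then show "x \<in> I" using I(2) I0 that unfolding is_interval_1 by (meson atLeastAtMost_iff)
  qed
  have Lder: "((\<lambda>\<tau>. ?L (w \<tau>)) has_real_derivative - (G (w \<tau>) \<bullet> G (w \<tau>))) (at \<tau>)" if "\<tau> \<in> I" for \<tau>
  proof -
    have "((\<lambda>\<tau>. ?L (w \<tau>)) has_real_derivative G (w \<tau>) \<bullet> - G (w \<tau>)) (at \<tau>)"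
      by (rule comp_grad_deriv[of ?L G "w \<tau>" w "- G (w \<tau>)" \<tau>, OF grad wd[OF that] refl])
    then show ?thesis by simp
  qed
  have Ldec: "?L (w t) \<le> ?L w0" if t: "t \<in> I" "0 \<le> t" for t
  proof -
    have "?L (w t) \<le> ?L (w 0)"
    proof (rule DERIV_nonpos_imp_decreasing_open[OF t(2)])
      fix x assume "0 < x" "x < t"
      then have "x \<in> I" using Isub[OF t] by auto
      then show "\<exists>y. ((\<lambda>\<tau>. ?L (w \<tau>)) has_real_derivative y) (at x) \<and> y \<le> 0"
        using Lder by (intro exI[of _ "- (G (w x) \<bullet> G (w x))"]) auto
    next
      show "continuous_on {0..t} (\<lambda>\<tau>. ?L (w \<tau>))"
        by (rule continuous_at_imp_continuous_on) (use Lder Isub[OF t] DERIV_isCont in blast)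
    qed
    then show ?thesis using w00 by simp
  qed
  have cons: "B.bn i (w t) - B.bn 1 (w t) = B.bn i w0 - B.bn 1 w0" if t: "t \<in> I" "0 \<le> t" and i: "i \<in> {1..N}" for t i
  proof -
    have i1: "1 \<in> {1..N}" using N1 by simp
    have hd: "((\<lambda>\<tau>. B.bn i (w \<tau>) - B.bn 1 (w \<tau>)) has_real_derivative 0) (at \<tau>)" if "\<tau> \<in> I" for \<tau>
    proof -
      have "((\<lambda>\<tau>. B.bn i (w \<tau>) - B.bn 1 (w \<tau>)) has_real_derivative
          2 * (- G (w \<tau>) \<bullet> B.Bv i (w \<tau>)) - 2 * (- G (w \<tau>) \<bullet> B.Bv 1 (w \<tau>))) (at \<tau>)"
        by (intro DERIV_diff B.bn_deriv[OF i] B.bn_deriv[OF i1] wd that)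
      moreover have "G (w \<tau>) \<bullet> B.Bv i (w \<tau>) = G (w \<tau>) \<bullet> B.Bv 1 (w \<tau>)"
        by (rule B.grad_block_eq[OF grad i i1])
      ultimately show ?thesis by simp
    qed
    show ?thesis
    proof (cases "t = 0")
      case True then show ?thesis using w00 by simp
    next
      case False
      then have "0 < t" using t by simp
      have "(\<lambda>\<tau>. B.bn i (w \<tau>) - B.bn 1 (w \<tau>)) t = (\<lambda>\<tau>. B.bn i (w \<tau>) - B.bn 1 (w \<tau>)) 0"
      proof (rule DERIV_isconst_end[OF \<open>0 < t\<close>])
        show "continuous_on {0..t} (\<lambda>\<tau>. B.bn i (w \<tau>) - B.bn 1 (w \<tau>))"
          by (rule continuous_at_imp_continuous_on) (use hd Isub[OF t] DERIV_isCont in blast)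
        fix x assume "0 < x" "x < t"
        then have "x \<in> I" using Isub[OF t] by auto
        then show "((\<lambda>\<tau>. B.bn i (w \<tau>) - B.bn 1 (w \<tau>)) has_real_derivative 0) (at x)"
          by (rule hd)
      qed
      then show ?thesis using w00 by simp
    qed
  qed
  have part1: "open I \<and> is_interval I \<and> grad_flow_sol G w0 I w \<and>
     (\<forall>J v. open J \<and> is_interval J \<and> grad_flow_sol G w0 J v \<longrightarrow> J \<subseteq> I \<and> (\<forall>t\<in>J. v t = w t))"
    unfolding gs using I sol max by blast
  show ?thesis
  proof (intro exI[of _ I] exI[of _ w] conjI impI part1[THEN conjunct1] part1[THEN conjunct2, THEN conjunct1]
      part1[THEN conjunct2, THEN conjunct2, THEN conjunct1] part1[THEN conjunct2, THEN conjunct2, THEN conjunct2])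
    assume "\<exists>g :: real \<Rightarrow> real. mono g \<and> (\<forall>t. 0 \<le> g t) \<and> (\<forall>x. final_filter_l1 N d k s pidx x \<le> g (?L x))"
    then obtain g :: "real \<Rightarrow> real" where gm: "mono g" and gnn: "\<And>t. 0 \<le> g t"
      and gb: "\<And>x. final_filter_l1 N d k s pidx x \<le> g (?L x)" by blast
    obtain mm where mm: "mm > 0" "\<And>x. mm * (\<Prod>i\<in>{1..N}. sqrt (B.bn i x)) \<le> final_filter_l1 N d k s pidx x"
      using B.ff_lower[OF arch N1] by blast
    define M0 where "M0 = g (?L w0)"
    define Q where "Q = (\<Sum>i\<in>{1..N}. \<bar>B.bn i w0 - B.bn 1 w0\<bar>)"
    define A where "A = Q + 1 + (M0 / mm)\<^sup>2"
    define R where "R = sqrt (real N * (A + Q))"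
    have M0nn: "0 \<le> M0" using gnn by (simp add: M0_def)
    have bound: "norm (w t) \<le> R" if t: "t \<in> I" "0 \<le> t" for t
    proof -
      have qi: "\<bar>B.bn i w0 - B.bn 1 w0\<bar> \<le> Q" if "i \<in> {1..N}" for i
        unfolding Q_def by (rule member_le_sum) (use that in auto)
      have lo: "B.bn 1 (w t) - Q \<le> B.bn i (w t)" and hi: "B.bn i (w t) \<le> B.bn 1 (w t) + Q" if "i \<in> {1..N}" for i
        using cons[OF t that] qi[OF that] by auto
      have ffb: "mm * (\<Prod>i\<in>{1..N}. sqrt (B.bn i (w t))) \<le> M0"
      proof -
        have "final_filter_l1 N d k s pidx (w t) \<le> g (?L (w t))" by (rule gb)
        also have "\<dots> \<le> M0" unfolding M0_def by (rule monoD[OF gm Ldec[OF t]])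
        finally show ?thesis using mm(2)[of "w t"] by linarith
      qed
      have b1: "B.bn 1 (w t) \<le> A"
      proof (rule ccontr)
        assume "\<not> B.bn 1 (w t) \<le> A"
        then have big: "A < B.bn 1 (w t)" by simp
        have ge1: "1 \<le> sqrt (B.bn i (w t))" if "i \<in> {1..N}" for i
        proof -
          have "1 \<le> B.bn i (w t)" using lo[OF that] big unfolding A_def
            by (smt (verit) zero_le_power2)
          then show ?thesis by simp
        qed
        have "M0 / mm < sqrt (B.bn 1 (w t))"
          by (rule real_less_rsqrt) (use big in \<open>simp add: A_def Q_def\<close>, smt (verit) sum_nonneg abs_ge_zero)
        then have "M0 < mm * sqrt (B.bn 1 (w t))" using mm(1) by (simp add: field_simps)
        also have "\<dots> \<le> mm * (\<Prod>i\<in>{1..N}. sqrt (B.bn i (w t)))"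
          using prod_ge_factor[of "{1..N}" 1 "\<lambda>i. sqrt (B.bn i (w t))"] ge1 N1 mm(1) by simp
        finally show False using ffb by simp
      qed
      have "(norm (w t))\<^sup>2 = (\<Sum>i\<in>{1..N}. B.bn i (w t))" by (rule B.norm_sq)
      also have "\<dots> \<le> (\<Sum>i\<in>{1..N}. A + Q)"
        by (rule sum_mono) (use hi b1 in fastforce)
      also have "\<dots> = real N * (A + Q)" by simp
      finally have "(norm (w t))\<^sup>2 \<le> real N * (A + Q)" .
      then show ?thesis unfolding R_def by (simp add: real_le_rsqrt)
    qed
    show all: "{0..} \<subseteq> I"
      by (rule ode_global[OF lipF contF I sol max]) (use bound in auto)
    show "bounded (w ` {0..})"
      unfolding bounded_iff using bound all by auto
    interpret F: gflow ?L G w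
      by unfold_locales (use grad Gc wd all in auto)
    show "\<exists>z. G z = 0 \<and> (w \<longlongrightarrow> z) at_top"
      by (rule F.converge) (use bound all loj in \<open>auto simp: bounded_iff\<close>)
  qed
qed

end
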